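(* Consider the model and dynamics described in the context, with the Glauber dynamics constructed from independent unit-rate Poisson processes as described there, for any $\alpha\in\mathbb{R}$, $\eta\in(0,1]$ and $\beta_n\in(0,\infty]$. Let $\gamma_n,t_n>0$ be sequences with $\gamma_n^2t_n/n\to0$ as $n\to\infty$. Then $$\sup_{t\in[0,t_n]}\frac{\gamma_n}{V_n^k}\big|\mathcal{M}_n^k(t)\big|\Rightarrow0\quad\text{as }n\to\infty,\quad\text{for all }k\in\{1,2\}.$$ If moreover $\gamma_n/\sqrt n\to0$ as $n\to\infty$, then $$\gamma_n\Big(\frac{\mathcal{M}_n^1}{V_n^1},\frac{\mathcal{M}_n^2}{V_n^2}\Big)\Rightarrow0\quad\text{in }D_{\mathbb{R}^2}[0,\infty)\text{ as }n\to\infty.$$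
   Context: Model: for each $n$, the node set $\mathcal{V}_n=\mathcal{V}_n^1\cup\mathcal{V}_n^2$ is a disjoint union of two communities of sizes $V_n^k$ with $V_n^k/n\to v^k\in(0,\infty)$. The graph $\mathcal{G}_n$ is a stochastic block model: each pair of distinct nodes is an edge independently with probability $a\lambda_n/n$ within a community and $b\lambda_n/n$ across communities ($a>b>0$, $\lambda_n\to\infty$); $u\sim v$ denotes adjacency. For $\sigma:\mathcal{V}_n\to\{-1,1\}$, $\alpha_n=\alpha\lambda_n/n$ and $\Delta_n(\sigma,u)=2\sigma(u)[\sum_{v\sim u}\sigma(v)-\alpha_n\sum_{v\ne u}\sigma(v)]$; $r(x)=1/(1+e^x)$, with the convention $r(\beta_nx)=\mathbf{1}\{x<0\}+\tfrac12\mathbf{1}\{x=0\}$ if $\beta_n=\infty$. The Glauber dynamics $\boldsymbol{\sigma}_n(t)$ is the continuous-time Markov chain in which each spin $u$ flips independently at rate $r(\beta_n\Delta_n(\boldsymbol{\sigma}_n(t),u))$, started from the configuration in which independently each node, with probability $\eta$, has its correct spin ($+1$ on $\mathcal{V}_n^1$, $-1$ on $\mathcal{V}_n^2$) and otherwise a uniform random spin. Let $\boldsymbol{z}^k_n(t)=\frac1{V_n^k}\sum_{u\in\mathcal{V}_n^k}\boldsymbol{\sigma}_n(t,u)$. For $s\in\{-,+\}$ let $$\boldsymbol{i}^{k,s}_n(t)=\int_0^t\sum_{u\in\mathcal{V}_n^k:\ \boldsymbol{\sigma}_n(\tau,u)=s1}r\big(\beta_n\Delta_n(\boldsymbol{\sigma}_n(\tau),u)\big)\,d\tau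 .$$ The chain is constructed from independent unit-rate Poisson processes $\mathcal{N}^k_+,\mathcal{N}^k_-$ ($k=1,2$) so that $\boldsymbol{z}^k_n(t)-\boldsymbol{z}^k_n(0)=\frac{2}{V_n^k}\big[\mathcal{N}^k_+(\boldsymbol{i}^{k,-}_n(t))-\mathcal{N}^k_-(\boldsymbol{i}^{k,+}_n(t))\big]$ for all $t\ge0$. Define $$\mathcal{M}^k_n(t)=\mathcal{N}^k_+(\boldsymbol{i}^{k,-}_n(t))-\mathcal{N}^k_-(\boldsymbol{i}^{k,+}_n(t))+\int_0^t\sum_{u\in\mathcal{V}_n^k}\boldsymbol{\sigma}_n(\tau,u)\,r\big(\beta_n\Delta_n(\boldsymbol{\sigma}_n(\tau),u)\big)d\tau .$$ $D_{\mathbb{R}^2}[0,\infty)$ is the space of càdlàg functions $[0,\infty)\to\mathbb{R}^2$ with the topology of uniform convergence over compact sets; $\Rightarrow$ is weak convergence. *)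

theory Defs
  imports "HOL-Probability.Probability"
begin

text \<open>r(beta x) = 1/(1+exp(beta x)); for beta = infinity the zero-temperature convention.\<close>
definition rfun :: "ereal \<Rightarrow> real \<Rightarrow> real" where
  "rfun \<beta> x = (if \<beta> = \<infinity> then (if x < 0 then 1 else if x = 0 then 1/2 else 0)
                 else 1 / (1 + exp (real_of_ereal \<beta> * x)))"

definition nodes :: "nat \<Rightarrow> nat \<Rightarrow> nat set" where
  "nodes V1 V2 = {..<V1 + V2}"

definition comm :: "nat \<Rightarrow> nat \<Rightarrow> nat \<Rightarrow> nat set" where
  "comm V1 V2 k = (if k = 1 then {..<V1} else {V1..<V1 + V2})"

definition csize :: "nat \<Rightarrow> nat \<Rightarrow> nat \<Rightarrow> nat" where
  "csize V1 V2 k = (if k = 1 then V1 else V2)"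

definition correct :: "nat \<Rightarrow> nat \<Rightarrow> real" where
  "correct V1 u = (if u < V1 then 1 else -1)"

definition configs :: "nat \<Rightarrow> nat \<Rightarrow> (nat \<Rightarrow> real) set" where
  "configs V1 V2 = {x. (\<forall>u\<in>nodes V1 V2. x u = 1 \<or> x u = -1) \<and> (\<forall>u. u \<notin> nodes V1 V2 \<longrightarrow> x u = 0)}"

text \<open>Delta_n(sigma,u) = 2 sigma(u) [sum_{v~u} sigma(v) - alpha_n sum_{v<>u} sigma(v)],
  with alpha_n = alpha lambda_n / n passed as the argument al.\<close>
definition Delta :: "nat \<Rightarrow> nat \<Rightarrow> (nat \<Rightarrow> nat \<Rightarrow> bool) \<Rightarrow> real \<Rightarrow> (nat \<Rightarrow> real) \<Rightarrow> nat \<Rightarrow> real" where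
  "Delta V1 V2 g al x u = 2 * x u * ((\<Sum>v\<in>nodes V1 V2 - {u}. if g u v then x v else 0)
                                      - al * (\<Sum>v\<in>nodes V1 V2 - {u}. x v))"

definition simple_on :: "nat set \<Rightarrow> (nat \<Rightarrow> nat \<Rightarrow> bool) \<Rightarrow> bool" where
  "simple_on A g = (\<forall>u\<in>A. \<not> g u u \<and> (\<forall>v\<in>A. g u v = g v u))"

definition sbm_prob :: "nat \<Rightarrow> nat \<Rightarrow> real \<Rightarrow> real \<Rightarrow> (nat \<Rightarrow> nat \<Rightarrow> bool) \<Rightarrow> real" where
  "sbm_prob V1 V2 pin pout g =
    (if simple_on (nodes V1 V2) g then
       (\<Prod>(u,v)\<in>{(u,v). u \<in> nodes V1 V2 \<and> v \<in> nodes V1 V2 \<and> u < v}.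
          (let p = (if (u < V1) = (v < V1) then pin else pout) in
           if g u v then p else 1 - p))
     else 0)"

text \<open>Initial law: independently, with prob. eta the correct spin, otherwise uniform.\<close>
definition init_prob :: "nat \<Rightarrow> nat \<Rightarrow> real \<Rightarrow> (nat \<Rightarrow> real) \<Rightarrow> real" where
  "init_prob V1 V2 \<eta> x =
     (\<Prod>u\<in>nodes V1 V2. \<eta> * (if x u = correct V1 u then 1 else 0) + (1 - \<eta>) / 2)"

definition flip :: "(nat \<Rightarrow> real) \<Rightarrow> nat \<Rightarrow> nat \<Rightarrow> real" where
  "flip x u = x(u := - x u)"

definition glauber_Q ::
  "nat \<Rightarrow> nat \<Rightarrow> (nat \<Rightarrow> nat \<Rightarrow> bool) \<Rightarrow> real \<Rightarrow> ereal \<Rightarrow> (nat \<Rightarrow> real) \<Rightarrow> (nat \<Rightarrow> real) \<Rightarrow> real" where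
  "glauber_Q V1 V2 g al \<beta> x y =
     (if x = y then - (\<Sum>u\<in>nodes V1 V2. rfun \<beta> (Delta V1 V2 g al x u))
      else (\<Sum>u\<in>nodes V1 V2. if y = flip x u then rfun \<beta> (Delta V1 V2 g al x u) else 0))"

fun glauber_Qpow ::
  "nat \<Rightarrow> nat \<Rightarrow> (nat \<Rightarrow> nat \<Rightarrow> bool) \<Rightarrow> real \<Rightarrow> ereal \<Rightarrow> nat \<Rightarrow> (nat \<Rightarrow> real) \<Rightarrow> (nat \<Rightarrow> real) \<Rightarrow> real" where
  "glauber_Qpow V1 V2 g al \<beta> 0 x y = (if x = y then 1 else 0)"
| "glauber_Qpow V1 V2 g al \<beta> (Suc k) x y =
     (\<Sum>z\<in>configs V1 V2. glauber_Q V1 V2 g al \<beta> x z * glauber_Qpow V1 V2 g al \<beta> k z y)"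

definition glauber_P ::
  "nat \<Rightarrow> nat \<Rightarrow> (nat \<Rightarrow> nat \<Rightarrow> bool) \<Rightarrow> real \<Rightarrow> ereal \<Rightarrow> real \<Rightarrow> (nat \<Rightarrow> real) \<Rightarrow> (nat \<Rightarrow> real) \<Rightarrow> real" where
  "glauber_P V1 V2 g al \<beta> t x y = (\<Sum>k. t ^ k / fact k * glauber_Qpow V1 V2 g al \<beta> k x y)"

definition pw_const_cadlag :: "(real \<Rightarrow> 'b) \<Rightarrow> bool" where
  "pw_const_cadlag f = (\<forall>t\<ge>0. (\<exists>e>0. \<forall>s. t \<le> s \<and> s < t + e \<longrightarrow> f s = f t)
                         \<and> (t > 0 \<longrightarrow> (\<exists>e>0. \<exists>c. \<forall>s. t - e < s \<and> s < t \<longrightarrow> f s = c)))"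

text \<open>Joint law of (graph, spin process): graph ~ SBM, initial configuration independent of the
  graph with law init_prob, and, given the graph, sigma is the continuous-time Markov chain with
  generator glauber_Q (finite-dimensional distributions).  al = alpha_n.\<close>
definition is_glauber_sbm ::
  "'a measure \<Rightarrow> nat \<Rightarrow> nat \<Rightarrow> real \<Rightarrow> real \<Rightarrow> real \<Rightarrow> real \<Rightarrow> ereal
   \<Rightarrow> ('a \<Rightarrow> nat \<Rightarrow> nat \<Rightarrow> bool) \<Rightarrow> ('a \<Rightarrow> real \<Rightarrow> nat \<Rightarrow> real) \<Rightarrow> bool" where
  "is_glauber_sbm M V1 V2 pin pout \<eta> al \<beta> G \<sigma> \<longleftrightarrow>
     (\<forall>u v. (\<lambda>\<omega>. G \<omega> u v) \<in> measurable M (count_space UNIV)) \<and>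
     (\<forall>t u. (\<lambda>\<omega>. \<sigma> \<omega> t u) \<in> borel_measurable M) \<and>
     (\<forall>\<omega>\<in>space M. pw_const_cadlag (\<sigma> \<omega>) \<and>
         (\<forall>t\<ge>0. \<forall>u\<in>nodes V1 V2. \<sigma> \<omega> t u = 1 \<or> \<sigma> \<omega> t u = -1)) \<and>
     (\<forall>g ts xs. length ts = length xs \<and> ts \<noteq> [] \<and> ts ! 0 = 0 \<and> sorted_wrt (<) ts
        \<and> set xs \<subseteq> configs V1 V2 \<longrightarrow>
        prob_space.prob M {\<omega>\<in>space M. (\<forall>u\<in>nodes V1 V2. \<forall>v\<in>nodes V1 V2. G \<omega> u v = g u v)
              \<and> (\<forall>j<length ts. \<forall>u\<in>nodes V1 V2. \<sigma> \<omega> (ts ! j) u = (xs ! j) u)}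
        = sbm_prob V1 V2 pin pout g * init_prob V1 V2 \<eta> (xs ! 0)
          * (\<Prod>j\<in>{1..<length ts}. glauber_P V1 V2 g al \<beta> (ts ! j - ts ! (j - 1)) (xs ! (j - 1)) (xs ! j)))"

definition indep_unit_poisson ::
  "'a measure \<Rightarrow> 'i set \<Rightarrow> ('i \<Rightarrow> 'a \<Rightarrow> real \<Rightarrow> real) \<Rightarrow> bool" where
  "indep_unit_poisson M I N \<longleftrightarrow>
     (\<forall>i\<in>I. \<forall>t. (\<lambda>\<omega>. N i \<omega> t) \<in> borel_measurable M) \<and>
     (\<forall>i\<in>I. \<forall>\<omega>\<in>space M. N i \<omega> 0 = 0 \<and> mono_on {0..} (N i \<omega>) \<and> pw_const_cadlag (N i \<omega>)
                         \<and> (\<forall>t\<ge>0. N i \<omega> t \<in> \<nat>)) \<and>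
     (\<forall>ts (c :: 'i \<Rightarrow> nat \<Rightarrow> nat). sorted_wrt (<) ts \<and> (\<forall>t\<in>set ts. 0 < t) \<longrightarrow>
        prob_space.prob M {\<omega>\<in>space M. \<forall>i\<in>I. \<forall>j<length ts.
             N i \<omega> (ts ! j) - N i \<omega> (if j = 0 then 0 else ts ! (j - 1)) = real (c i j)}
        = (\<Prod>i\<in>I. \<Prod>j<length ts.
             (let d = ts ! j - (if j = 0 then 0 else ts ! (j - 1)) in
              d ^ c i j / fact (c i j) * exp (- d))))"

definition frate :: "nat \<Rightarrow> nat \<Rightarrow> real \<Rightarrow> ereal \<Rightarrow> (nat \<Rightarrow> nat \<Rightarrow> bool) \<Rightarrow> (real \<Rightarrow> nat \<Rightarrow> real)
                      \<Rightarrow> real \<Rightarrow> nat \<Rightarrow> real" where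
  "frate V1 V2 al \<beta> g s \<tau> u = rfun \<beta> (Delta V1 V2 g al (s \<tau>) u)"

text \<open>i^{k,s}(t), with s = True for + and False for -\<close>
definition icum :: "nat \<Rightarrow> nat \<Rightarrow> real \<Rightarrow> ereal \<Rightarrow> (nat \<Rightarrow> nat \<Rightarrow> bool) \<Rightarrow> (real \<Rightarrow> nat \<Rightarrow> real)
                      \<Rightarrow> nat \<Rightarrow> bool \<Rightarrow> real \<Rightarrow> real" where
  "icum V1 V2 al \<beta> g s k sg t =
     integral {0..t} (\<lambda>\<tau>. \<Sum>u\<in>comm V1 V2 k.
        if s \<tau> u = (if sg then 1 else -1) then frate V1 V2 al \<beta> g s \<tau> u else 0)"

definition zmag :: "nat \<Rightarrow> nat \<Rightarrow> (real \<Rightarrow> nat \<Rightarrow> real) \<Rightarrow> nat \<Rightarrow> real \<Rightarrow> real" where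
  "zmag V1 V2 s k t = (\<Sum>u\<in>comm V1 V2 k. s t u) / real (csize V1 V2 k)"

text \<open>The process M^k(t); Np k sg is N^k_+ (sg = True) or N^k_- (sg = False).\<close>
definition Mproc :: "nat \<Rightarrow> nat \<Rightarrow> real \<Rightarrow> ereal \<Rightarrow> (nat \<Rightarrow> nat \<Rightarrow> bool) \<Rightarrow> (real \<Rightarrow> nat \<Rightarrow> real)
                      \<Rightarrow> (nat \<Rightarrow> bool \<Rightarrow> real \<Rightarrow> real) \<Rightarrow> nat \<Rightarrow> real \<Rightarrow> real" where
  "Mproc V1 V2 al \<beta> g s Np k t =
     Np k True (icum V1 V2 al \<beta> g s k False t) - Np k False (icum V1 V2 al \<beta> g s k True t)
     + integral {0..t} (\<lambda>\<tau>. \<Sum>u\<in>comm V1 V2 k. s \<tau> u * frate V1 V2 al \<beta> g s \<tau> u)"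

text \<open>For a sequence of processes X n on probability spaces P n: weak convergence to the
  (deterministic) zero path in D_{R^2}[0,infinity) with the topology of uniform convergence on
  compacts; since the limit is deterministic this is rendered as: for each T, the sup-norm
  on [0,T] converges in distribution to 0.\<close>
definition weak_conv_zero_D :: "(nat \<Rightarrow> 'a measure) \<Rightarrow> (nat \<Rightarrow> 'a \<Rightarrow> real \<Rightarrow> real \<times> real) \<Rightarrow> bool" where
  "weak_conv_zero_D P X \<longleftrightarrow>
     (\<forall>T\<ge>0. weak_conv_m (\<lambda>n. distr (P n) borel (\<lambda>\<omega>. SUP t\<in>{0..T}. norm (X n \<omega> t)))
                         (return borel 0))"

end

theory Submission
  imports Defs
begin

lemma poisson_sums_aux:
  fixes r :: real
  shows "(\<lambda>k. r ^ k / fact k) sums exp r"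
    and "(\<lambda>k. real k * (r ^ k / fact k)) sums (r * exp r)"
    and "(\<lambda>k. real k * (real k - 1) * (r ^ k / fact k)) sums (r\<^sup>2 * exp r)"
proof -
  show s0: "(\<lambda>k. r ^ k / fact k) sums exp r"
    using exp_converges[of r] by (simp add: divide_inverse scaleR_conv_of_real mult.commute)
  have "(\<lambda>k. real (Suc k) * (r ^ Suc k / fact (Suc k))) = (\<lambda>k. r * (r ^ k / fact k))"
    by (rule ext) (simp add: fact_Suc divide_simps del: of_nat_Suc)
  hence "(\<lambda>k. real (Suc k) * (r ^ Suc k / fact (Suc k))) sums (r * exp r)"
    using sums_mult[OF s0, of r] by simp
  thus "(\<lambda>k. real k * (r ^ k / fact k)) sums (r * exp r)"
    by (subst (asm) sums_Suc_iff) simp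
  have "(\<lambda>k. real (Suc (Suc k)) * (real (Suc (Suc k)) - 1) * (r ^ Suc (Suc k) / fact (Suc (Suc k))))
        = (\<lambda>k. r\<^sup>2 * (r ^ k / fact k))"
    by (rule ext) (simp add: fact_Suc divide_simps power2_eq_square del: of_nat_Suc)
  hence "(\<lambda>k. real (Suc (Suc k)) * (real (Suc (Suc k)) - 1) * (r ^ Suc (Suc k) / fact (Suc (Suc k)))) sums (r\<^sup>2 * exp r)"
    using sums_mult[OF s0, of "r\<^sup>2"] by simp
  thus "(\<lambda>k. real k * (real k - 1) * (r ^ k / fact k)) sums (r\<^sup>2 * exp r)"
    by (subst (asm) sums_Suc_iff, subst (asm) sums_Suc_iff) simp
qed

lemma poisson_var_sums:
  fixes r :: real
  shows "(\<lambda>k. r ^ k / fact k * exp (-r) * (real k - r)\<^sup>2) sums r"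
proof -
  note s = poisson_sums_aux[of r]
  have "(\<lambda>k. exp (-r) * (real k * (real k - 1) * (r ^ k / fact k) + real k * (r ^ k / fact k)
          - (2*r) * (real k * (r ^ k / fact k)) + r\<^sup>2 * (r ^ k / fact k)))
        sums (exp (-r) * (r\<^sup>2 * exp r + r * exp r - (2*r) * (r * exp r) + r\<^sup>2 * exp r))"
    by (intro sums_mult sums_add sums_diff s) 
  moreover have "exp (-r) * (r\<^sup>2 * exp r + r * exp r - (2*r) * (r * exp r) + r\<^sup>2 * exp r) = r"
    by (simp add: field_simps power2_eq_square exp_minus)
  moreover have "(\<lambda>k. exp (-r) * (real k * (real k - 1) * (r ^ k / fact k) + real k * (r ^ k / fact k)
          - (2*r) * (real k * (r ^ k / fact k)) + r\<^sup>2 * (r ^ k / fact k)))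
        = (\<lambda>k. r ^ k / fact k * exp (-r) * (real k - r)\<^sup>2)"
    by (rule ext) (simp add: field_simps power2_eq_square)
  ultimately show ?thesis by simp
qed

lemma poisson_cheb:
  fixes r A :: real
  assumes r: "0 < r" and A: "0 < A"
  shows "measure_pmf.prob (poisson_pmf r) {k. A \<le> \<bar>real k - r\<bar>} \<le> r / A\<^sup>2"
proof -
  let ?g = "\<lambda>k::nat. r ^ k / fact k * exp (-r) * (real k - r)\<^sup>2 / A\<^sup>2"
  have sg: "?g sums (r / A\<^sup>2)"
    using sums_divide[OF poisson_var_sums[of r], of "A\<^sup>2"] by simp
  have ind: "indicator {k. A \<le> \<bar>real k - r\<bar>} k \<le> ennreal ((real k - r)\<^sup>2 / A\<^sup>2)" for k :: nat
  proof (cases "A \<le> \<bar>real k - r\<bar>")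
    case True
    have "A\<^sup>2 \<le> (real k - r)\<^sup>2"
      using True A by (metis abs_ge_zero abs_of_pos power2_abs power_mono)
    hence "1 \<le> (real k - r)\<^sup>2 / A\<^sup>2" using A by simp
    thus ?thesis using True by (simp add: indicator_def)
  qed (simp add: indicator_def)
  have "emeasure (measure_pmf (poisson_pmf r)) {k. A \<le> \<bar>real k - r\<bar>}
        = (\<integral>\<^sup>+k. indicator {k. A \<le> \<bar>real k - r\<bar>} k \<partial>measure_pmf (poisson_pmf r))"
    by simp
  also have "\<dots> \<le> (\<integral>\<^sup>+k. ennreal ((real k - r)\<^sup>2 / A\<^sup>2) \<partial>measure_pmf (poisson_pmf r))"
    by (intro nn_integral_mono ind)
  also have "\<dots> = (\<integral>\<^sup>+k. ennreal (pmf (poisson_pmf r) k) * ennreal ((real k - r)\<^sup>2 / A\<^sup>2) \<partial>count_space UNIV)"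
    by (rule nn_integral_measure_pmf)
  also have "\<dots> = (\<integral>\<^sup>+k. ennreal (?g k) \<partial>count_space UNIV)"
    using r by (intro nn_integral_cong) (simp add: ennreal_mult'[symmetric])
  also have "\<dots> = (\<Sum>k. ennreal (?g k))"
    by (rule nn_integral_count_space_nat)
  also have "\<dots> = ennreal (r / A\<^sup>2)"
    using sg r A by (intro suminf_ennreal_eq) auto
  finally show ?thesis
    using r A by (simp add: measure_pmf.emeasure_eq_measure)
qed


definition prevt :: "real list \<Rightarrow> nat \<Rightarrow> real" where
  "prevt ts j = (if j = 0 then 0 else ts ! (j - 1))"

definition incvec :: "('i \<Rightarrow> 'a \<Rightarrow> real \<Rightarrow> real) \<Rightarrow> real list \<Rightarrow> 'i \<Rightarrow> 'a \<Rightarrow> nat \<Rightarrow> nat" where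
  "incvec N ts i \<omega> j = (if j < length ts then nat \<lfloor>N i \<omega> (ts ! j) - N i \<omega> (prevt ts j)\<rfloor> else 0)"

definition poisvec :: "real list \<Rightarrow> (nat \<Rightarrow> nat) pmf" where
  "poisvec ts = Pi_pmf {..<length ts} 0 (\<lambda>j. poisson_pmf (ts ! j - prevt ts j))"

lemma countable_ext_funs:
  assumes "finite I"
  shows "countable {c :: 'i \<Rightarrow> nat \<Rightarrow> nat. \<forall>i j. \<not> (i \<in> I \<and> j < q) \<longrightarrow> c i j = 0}"
proof -
  define g where "g = (\<lambda>F::('i \<times> nat) \<Rightarrow> nat. \<lambda>i j. if i \<in> I \<and> j < q then F (i, j) else (0::nat))"
  have "{c :: 'i \<Rightarrow> nat \<Rightarrow> nat. \<forall>i j. \<not> (i \<in> I \<and> j < q) \<longrightarrow> c i j = 0}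
        \<subseteq> g ` (PiE (I \<times> {..<q}) (\<lambda>_. UNIV))"
  proof
    fix c :: "'i \<Rightarrow> nat \<Rightarrow> nat" assume c: "c \<in> {c. \<forall>i j. \<not> (i \<in> I \<and> j < q) \<longrightarrow> c i j = 0}"
    have "c = g (restrict (\<lambda>(i,j). c i j) (I \<times> {..<q}))"
    proof (intro ext)
      fix i j
      show "c i j = g (restrict (\<lambda>(i,j). c i j) (I \<times> {..<q})) i j"
      proof (cases "i \<in> I \<and> j < q")
        case True thus ?thesis by (simp add: g_def)
      next
        case False thus ?thesis using c by (auto simp: g_def)
      qed
    qed
    moreover have "restrict (\<lambda>(i,j). c i j) (I \<times> {..<q}) \<in> PiE (I \<times> {..<q}) (\<lambda>_. UNIV)"
      by (simp add: PiE_iff)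
    ultimately show "c \<in> g ` (PiE (I \<times> {..<q}) (\<lambda>_. UNIV))" by (rule image_eqI)
  qed
  moreover have "countable (PiE (I \<times> {..<q}) (\<lambda>_. UNIV :: nat set))"
    by (rule countable_PiE) (simp_all add: assms)
  hence "countable (g ` (PiE (I \<times> {..<q}) (\<lambda>_. UNIV)))"
    by (rule countable_image)
  ultimately show ?thesis by (rule countable_subset)
qed

context
  fixes M :: "'a measure" and I :: "'i set" and N :: "'i \<Rightarrow> 'a \<Rightarrow> real \<Rightarrow> real" and ts :: "real list"
  assumes P: "prob_space M" and finI: "finite I" and NP: "indep_unit_poisson M I N"
    and ts_sorted: "sorted_wrt (<) ts" and ts_pos: "\<forall>t\<in>set ts. 0 < t"
begin

lemma prevt_le: "j < length ts \<Longrightarrow> prevt ts j < ts ! j"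
proof (cases j)
  case 0
  assume "j < length ts" thus ?thesis using 0 ts_pos nth_mem[of 0 ts] by (simp add: prevt_def)
next
  case (Suc k)
  assume "j < length ts" thus ?thesis using Suc ts_sorted by (simp add: prevt_def sorted_wrt_iff_nth_less)
qed

lemma prevt_nonneg: "j < length ts \<Longrightarrow> 0 \<le> prevt ts j"
proof (cases j)
  case (Suc k)
  assume "j < length ts"
  hence "ts ! k \<in> set ts" using Suc by simp
  thus ?thesis using Suc ts_pos by (simp add: prevt_def less_imp_le)
qed (simp add: prevt_def)

lemma ts_nth_pos: "j < length ts \<Longrightarrow> 0 < ts ! j"
  using ts_pos by auto

lemma incr_nat:
  assumes "i \<in> I" "\<omega> \<in> space M" "j < length ts"
  shows "real (incvec N ts i \<omega> j) = N i \<omega> (ts ! j) - N i \<omega> (prevt ts j)"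
proof -
  have props: "\<forall>t\<ge>0. N i \<omega> t \<in> \<nat>" "mono_on {0..} (N i \<omega>)"
    using NP assms unfolding indep_unit_poisson_def by auto
  have "N i \<omega> (ts ! j) \<in> \<nat>" using props(1) ts_nth_pos[OF assms(3)] by simp
  then obtain a where a: "N i \<omega> (ts ! j) = real a" by (rule Nats_cases)
  have "N i \<omega> (prevt ts j) \<in> \<nat>" using props(1) prevt_nonneg[OF assms(3)] by simp
  then obtain b where b: "N i \<omega> (prevt ts j) = real b" by (rule Nats_cases)
  have "N i \<omega> (prevt ts j) \<le> N i \<omega> (ts ! j)"
    using props(2) prevt_nonneg[OF assms(3)] prevt_le[OF assms(3)]
    by (intro mono_onD[OF props(2)]) auto
  hence "b \<le> a" using a b by simp
  thus ?thesis using assms(3) a b by (simp add: incvec_def of_nat_diff)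
qed

definition Zv :: "'a \<Rightarrow> 'i \<Rightarrow> nat \<Rightarrow> nat" where
  "Zv \<omega> i j = (if i \<in> I then incvec N ts i \<omega> j else 0)"

definition Om :: "('i \<Rightarrow> nat \<Rightarrow> nat) set" where
  "Om = {c. \<forall>i j. \<not> (i \<in> I \<and> j < length ts) \<longrightarrow> c i j = 0}"

lemma Om_countable: "countable Om"
  unfolding Om_def by (rule countable_ext_funs[OF finI])

lemma Zv_Om: "Zv \<omega> \<in> Om"
  by (auto simp: Zv_def Om_def incvec_def)

lemma Zv_pre:
  assumes "c \<in> Om"
  shows "Zv -` {c} \<inter> space M =
    {\<omega> \<in> space M. \<forall>i\<in>I. \<forall>j<length ts. N i \<omega> (ts ! j) - N i \<omega> (if j = 0 then 0 else ts ! (j - 1)) = real (c i j)}"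
proof (intro set_eqI iffI)
  fix \<omega> assume w: "\<omega> \<in> Zv -` {c} \<inter> space M"
  show "\<omega> \<in> {\<omega> \<in> space M. \<forall>i\<in>I. \<forall>j<length ts. N i \<omega> (ts ! j) - N i \<omega> (if j = 0 then 0 else ts ! (j - 1)) = real (c i j)}"
  proof -
    have wZ: "Zv \<omega> = c" and ws: "\<omega> \<in> space M" using w by auto
    have "N i \<omega> (ts ! j) - N i \<omega> (if j = 0 then 0 else ts ! (j - 1)) = real (c i j)"
      if "i \<in> I" "j < length ts" for i j
    proof -
      have "c i j = incvec N ts i \<omega> j" using wZ[symmetric] that by (simp add: Zv_def)
      thus ?thesis using incr_nat[OF that(1) ws that(2)] by (simp add: prevt_def)
    qed
    thus ?thesis using ws by blast
  qed
next
  fix \<omega> assume w: "\<omega> \<in> {\<omega> \<in> space M. \<forall>i\<in>I. \<forall>j<length ts. N i \<omega> (ts ! j) - N i \<omega> (if j = 0 then 0 else ts ! (j - 1)) = real (c i j)}"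
  have "Zv \<omega> = c"
  proof (intro ext)
    fix i j
    show "Zv \<omega> i j = c i j"
    proof (cases "i \<in> I \<and> j < length ts")
      case True
      hence "real (incvec N ts i \<omega> j) = real (c i j)"
        using w incr_nat[of i \<omega> j] by (auto simp: prevt_def)
      thus ?thesis using True by (simp add: Zv_def)
    next
      case False
      thus ?thesis using assms by (auto simp: Zv_def Om_def incvec_def)
    qed
  qed
  thus "\<omega> \<in> Zv -` {c} \<inter> space M" using w by auto
qed

lemma Zv_meas: "Zv \<in> measurable M (count_space UNIV)"
proof -
  have NPm: "\<And>i t. i \<in> I \<Longrightarrow> (\<lambda>\<omega>. N i \<omega> t) \<in> borel_measurable M"
    using NP unfolding indep_unit_poisson_def by auto
  have "Zv \<in> measurable M (count_space Om)"
  proof (subst measurable_count_space_eq_countable[OF Om_countable], intro conjI ballI)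
    show "Zv \<in> space M \<rightarrow> Om" using Zv_Om by auto
    fix c assume c: "c \<in> Om"
    show "Zv -` {c} \<inter> space M \<in> sets M"
      unfolding Zv_pre[OF c]
      using finI NPm by measurable
  qed
  from measurable_compose[OF this measurable_count_space[of "\<lambda>x. x" Om]] show ?thesis by simp
qed

definition Qv :: "('i \<Rightarrow> nat \<Rightarrow> nat) pmf" where
  "Qv = Pi_pmf I (\<lambda>_. 0) (\<lambda>i. poisvec ts)"

lemma distr_Zv: "distr M (count_space UNIV) Zv = measure_pmf Qv"
proof (rule measure_eqI_countable_AE[where \<Omega> = Om])
  show "AE x in distr M (count_space UNIV) Zv. x \<in> Om"
    by (subst AE_distr_iff[OF Zv_meas]) (auto simp: Zv_Om)
  show "AE x in measure_pmf Qv. x \<in> Om"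
  proof (rule AE_pmfI)
    fix c assume c: "c \<in> set_pmf Qv"
    have out: "\<forall>i. i \<notin> I \<longrightarrow> c i = (\<lambda>_. 0)"
      using set_Pi_pmf_subset[OF finI, of "\<lambda>_. 0" "\<lambda>i. poisvec ts"] c unfolding Qv_def by auto
    have "c i \<in> set_pmf (poisvec ts)" if "i \<in> I" for i
    proof -
      have "c i \<in> set_pmf (map_pmf (\<lambda>f. f i) Qv)" using c by auto
      also have "map_pmf (\<lambda>f. f i) Qv = poisvec ts"
        unfolding Qv_def by (simp add: Pi_pmf_component[OF finI] that)
      finally show ?thesis .
    qed
    hence "\<forall>i\<in>I. \<forall>j. \<not> j < length ts \<longrightarrow> c i j = 0"
      using set_Pi_pmf_subset[of "{..<length ts}" 0] unfolding poisvec_def by fastforce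
    thus "c \<in> Om" using out unfolding Om_def by auto
  qed
  show "countable Om" by (rule Om_countable)
  fix c assume c: "c \<in> Om"
  have "emeasure (distr M (count_space UNIV) Zv) {c} = emeasure M (Zv -` {c} \<inter> space M)"
    by (rule emeasure_distr[OF Zv_meas]) auto
  also have "\<dots> = ennreal (prob_space.prob M (Zv -` {c} \<inter> space M))"
    using P by (simp add: prob_space_def finite_measure.emeasure_eq_measure)
  also have "prob_space.prob M (Zv -` {c} \<inter> space M) =
      (\<Prod>i\<in>I. \<Prod>j<length ts. (let d = ts ! j - (if j = 0 then 0 else ts ! (j - 1)) in
              d ^ c i j / fact (c i j) * exp (- d)))"
    unfolding Zv_pre[OF c] using NP ts_sorted ts_pos unfolding indep_unit_poisson_def by blast
  also have "\<dots> = pmf Qv c"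
  proof -
    have "pmf Qv c = (\<Prod>i\<in>I. pmf (poisvec ts) (c i))"
      unfolding Qv_def using c by (subst pmf_Pi[OF finI]) (auto simp: Om_def fun_eq_iff)
    also have "\<dots> = (\<Prod>i\<in>I. \<Prod>j<length ts. pmf (poisson_pmf (ts ! j - prevt ts j)) (c i j))"
      unfolding poisvec_def using c by (intro prod.cong refl, subst pmf_Pi) (auto simp: Om_def)
    also have "\<dots> = (\<Prod>i\<in>I. \<Prod>j<length ts. (let d = ts ! j - (if j = 0 then 0 else ts ! (j - 1)) in
              d ^ c i j / fact (c i j) * exp (- d)))"
      using prevt_le by (intro prod.cong refl) (simp add: prevt_def Let_def)
    finally show ?thesis by simp
  qed
  finally show "emeasure (distr M (count_space UNIV) Zv) {c} = emeasure (measure_pmf Qv) {c}"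
    by (simp add: emeasure_pmf_single)
qed simp_all

lemma law_single:
  assumes i0: "i0 \<in> I"
  shows "prob_space.prob M {\<omega>\<in>space M. incvec N ts i0 \<omega> \<in> B} = measure_pmf.prob (poisvec ts) B"
proof -
  have "Zv \<omega> i0 = incvec N ts i0 \<omega>" for \<omega> using i0 by (simp add: Zv_def fun_eq_iff)
  hence "{\<omega>\<in>space M. incvec N ts i0 \<omega> \<in> B} = Zv -` {c. c i0 \<in> B} \<inter> space M"
    by auto
  hence "prob_space.prob M {\<omega>\<in>space M. incvec N ts i0 \<omega> \<in> B}
        = measure (distr M (count_space UNIV) Zv) {c. c i0 \<in> B}"
    by (simp add: measure_distr[OF Zv_meas])
  also have "\<dots> = measure_pmf.prob Qv {c. c i0 \<in> B}" by (simp add: distr_Zv)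
  also have "\<dots> = measure_pmf.prob (map_pmf (\<lambda>f. f i0) Qv) B" by (simp add: vimage_def)
  also have "map_pmf (\<lambda>f. f i0) Qv = poisvec ts"
    unfolding Qv_def by (simp add: Pi_pmf_component[OF finI] i0)
  finally show ?thesis .
qed

end

lemma pair_pmf_prob_times:
  "measure_pmf.prob (pair_pmf M N) (A \<times> B) = measure_pmf.prob M A * measure_pmf.prob N B"
proof -
  have "measure_pmf.prob (pair_pmf M N) (A \<times> B) = measure_pmf.prob (pair_pmf M N) ((A \<inter> set_pmf M) \<times> (B \<inter> set_pmf N))"
    by (subst (1 2) measure_Int_set_pmf[symmetric]) (auto simp: set_pair_pmf intro!: arg_cong[where f = "measure_pmf.prob (pair_pmf M N)"])
  also have "\<dots> = measure_pmf.prob M (A \<inter> set_pmf M) * measure_pmf.prob N (B \<inter> set_pmf N)"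
    by (rule measure_pmf_prob_product) (auto intro: countable_subset[OF _ countable_set_pmf])
  also have "\<dots> = measure_pmf.prob M A * measure_pmf.prob N B"
    by (simp add: measure_Int_set_pmf)
  finally show ?thesis .
qed

lemma Pi_pmf_insert_indep_aux:
  assumes fin: "finite A" and x: "x \<notin> A" and R: "\<And>f g. (\<forall>l\<in>A. f l = g l) \<Longrightarrow> R f = R g"
  shows "measure_pmf.prob (Pi_pmf (insert x A) d p) {f. R f \<and> S (f x)}
         = measure_pmf.prob (p x) {v. S v} * measure_pmf.prob (Pi_pmf A d p) {f. R f}"
proof -
  have "measure_pmf.prob (Pi_pmf (insert x A) d p) {f. R f \<and> S (f x)}
      = measure_pmf.prob (pair_pmf (p x) (Pi_pmf A d p)) ((\<lambda>(y,f). f(x:=y)) -` {f. R f \<and> S (f x)})"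
    by (simp add: Pi_pmf_insert[OF fin x])
  also have "(\<lambda>(y,f). f(x:=y)) -` {f. R f \<and> S (f x)} = {v. S v} \<times> {f. R f}"
  proof -
    have "R (f(x:=y)) = R f" for f y by (rule R) (use x in auto)
    thus ?thesis by auto
  qed
  also have "measure_pmf.prob (pair_pmf (p x) (Pi_pmf A d p)) \<dots> = measure_pmf.prob (p x) {v. S v} * measure_pmf.prob (Pi_pmf A d p) {f. R f}"
    by (rule pair_pmf_prob_times)
  finally show ?thesis .
qed

lemma Pi_pmf_insert_indep:
  assumes fin: "finite A" and x: "x \<notin> A" and R: "\<And>f g. (\<forall>l\<in>A. f l = g l) \<Longrightarrow> R f = R g"
  shows "measure_pmf.prob (Pi_pmf (insert x A) d p) {f. R f \<and> Q (f x)}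
         = measure_pmf.prob (Pi_pmf (insert x A) d p) {f. R f} * measure_pmf.prob (p x) {v. Q v}"
proof -
  have "measure_pmf.prob (Pi_pmf (insert x A) d p) {f. R f} = measure_pmf.prob (Pi_pmf (insert x A) d p) {f. R f \<and> True}"
    by simp
  also have "\<dots> = measure_pmf.prob (Pi_pmf A d p) {f. R f}"
    using Pi_pmf_insert_indep_aux[OF fin x R, where d=d and p=p and S="\<lambda>_. True"] by simp
  finally show ?thesis using Pi_pmf_insert_indep_aux[OF fin x R, where d=d and p=p and S=Q] by simp
qed

lemma Pi_pmf_comp_prob:
  assumes "finite A" "x \<in> A"
  shows "measure_pmf.prob (Pi_pmf A d p) {f. Q (f x)} = measure_pmf.prob (p x) {v. Q v}"
proof -
  have "measure_pmf.prob (Pi_pmf A d p) {f. Q (f x)} = measure_pmf.prob (map_pmf (\<lambda>f. f x) (Pi_pmf A d p)) {v. Q v}"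
    by (simp add: vimage_def)
  thus ?thesis by (simp add: Pi_pmf_component assms)
qed


lemma pois_half:
  assumes r: "0 < r" and A: "0 < A" and small: "r / A\<^sup>2 \<le> 1/2"
  shows "1/2 \<le> measure_pmf.prob (poisson_pmf r) {v. \<bar>real v - r\<bar> < A}"
proof -
  have "{v. \<bar>real v - r\<bar> < A} = UNIV - {v. A \<le> \<bar>real v - r\<bar>}" by auto
  hence "measure_pmf.prob (poisson_pmf r) {v. \<bar>real v - r\<bar> < A} = 1 - measure_pmf.prob (poisson_pmf r) {v. A \<le> \<bar>real v - r\<bar>}"
    using measure_pmf.prob_compl[of "{v. A \<le> \<bar>real v - r\<bar>}" "poisson_pmf r"] by simp
  thus ?thesis using poisson_cheb[OF r A] small by linarith
qed

lemma maximal_ineq: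
  fixes M :: "'a measure" and I :: "'i set" and N :: "'i \<Rightarrow> 'a \<Rightarrow> real \<Rightarrow> real"
  assumes P: "prob_space M" and finI: "finite I" and NP: "indep_unit_poisson M I N"
    and i0: "i0 \<in> I" and h: "0 < h" and A: "0 < A" and m: "1 \<le> m"
    and small: "real m * h / A\<^sup>2 \<le> 1/2"
  shows "prob_space.prob M {\<omega>\<in>space M. \<exists>k\<le>m. 2*A \<le> \<bar>N i0 \<omega> (real k * h) - real k * h\<bar>}
           \<le> 2 * (real m * h / A\<^sup>2)"
proof -
  interpret prob_space M by (rule P)
  have Nm[measurable]: "\<And>t. (\<lambda>\<omega>. N i0 \<omega> t) \<in> borel_measurable M"
    using NP i0 unfolding indep_unit_poisson_def by auto
  have N0: "\<And>\<omega>. \<omega> \<in> space M \<Longrightarrow> N i0 \<omega> 0 = 0"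
    using NP i0 unfolding indep_unit_poisson_def by auto
  define S where "S k \<omega> = N i0 \<omega> (real k * h) - real k * h" for k \<omega>
  define F where "F j = {\<omega>\<in>space M. (\<forall>k<j. \<bar>S k \<omega>\<bar> < 2*A) \<and> 2*A \<le> \<bar>S j \<omega>\<bar>}" for j
  define G where "G j = {\<omega>\<in>space M. \<bar>S m \<omega> - S j \<omega>\<bar> < A}" for j
  have Fm: "F j \<in> events" for j unfolding F_def S_def by measurable
  have Gm: "G j \<in> events" for j unfolding G_def S_def by measurable
  have mh: "0 < real m * h" using m h by simp
  have E_eq: "{\<omega>\<in>space M. \<exists>k\<le>m. 2*A \<le> \<bar>N i0 \<omega> (real k * h) - real k * h\<bar>} = (\<Union>j\<in>{..m}. F j)"
  proof (intro set_eqI iffI)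
    fix \<omega> assume "\<omega> \<in> {\<omega>\<in>space M. \<exists>k\<le>m. 2*A \<le> \<bar>N i0 \<omega> (real k * h) - real k * h\<bar>}"
    then obtain k where w: "\<omega> \<in> space M" "k \<le> m" "2*A \<le> \<bar>S k \<omega>\<bar>" by (auto simp: S_def)
    then obtain k' where k': "2*A \<le> \<bar>S k' \<omega>\<bar>" "\<forall>k''<k'. \<not> 2*A \<le> \<bar>S k'' \<omega>\<bar>"
      using exists_least_iff[of "\<lambda>k. 2*A \<le> \<bar>S k \<omega>\<bar>"] by blast
    have "k' \<le> k" using k' w by (meson not_le)
    thus "\<omega> \<in> (\<Union>j\<in>{..m}. F j)" using k' w by (auto simp: F_def not_le intro!: bexI[of _ k'])
  next
    fix \<omega> assume "\<omega> \<in> (\<Union>j\<in>{..m}. F j)"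
    thus "\<omega> \<in> {\<omega>\<in>space M. \<exists>k\<le>m. 2*A \<le> \<bar>N i0 \<omega> (real k * h) - real k * h\<bar>}"
      by (auto simp: F_def S_def)
  qed
  have disjF: "disjoint_family_on F {..m}"
  proof -
    have *: "F a \<inter> F b = {}" if "a < b" for a b
    proof -
      have "\<omega> \<notin> F b" if "\<omega> \<in> F a" for \<omega>
        using that \<open>a < b\<close> unfolding F_def by force
      thus ?thesis by blast
    qed
    show ?thesis unfolding disjoint_family_on_def
      by (metis * Int_commute linorder_neqE_nat)
  qed
  have sumF: "prob (\<Union>j\<in>{..m}. F j) = (\<Sum>j\<in>{..m}. prob (F j))"
    by (rule finite_measure_finite_Union) (use Fm disjF in auto)
  have disjFG: "disjoint_family_on (\<lambda>j. F j \<inter> G j) {..m}"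
    using disjF unfolding disjoint_family_on_def by blast
  have sumFG: "prob (\<Union>j\<in>{..m}. F j \<inter> G j) = (\<Sum>j\<in>{..m}. prob (F j \<inter> G j))"
    by (rule finite_measure_finite_Union) (use Fm Gm disjFG in auto)
  have cheb_m: "prob {\<omega>\<in>space M. A \<le> \<bar>S m \<omega>\<bar>} \<le> real m * h / A\<^sup>2"
  proof -
    define ts1 where "ts1 = [real m * h]"
    have s1: "sorted_wrt (<) ts1" "\<forall>t\<in>set ts1. 0 < t" using mh by (auto simp: ts1_def)
    have "{\<omega>\<in>space M. A \<le> \<bar>S m \<omega>\<bar>} = {\<omega>\<in>space M. incvec N ts1 i0 \<omega> \<in> {c. A \<le> \<bar>real (c 0) - real m * h\<bar>}}"
      using incr_nat[OF P finI NP s1 i0, of _ 0] N0 by (auto simp: S_def ts1_def prevt_def)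
    also have "prob \<dots> = measure_pmf.prob (poisvec ts1) {c. A \<le> \<bar>real (c 0) - real m * h\<bar>}"
      by (rule law_single[OF P finI NP s1 i0])
    also have "\<dots> = measure_pmf.prob (poisson_pmf (real m * h)) {v. A \<le> \<bar>real v - real m * h\<bar>}"
      unfolding poisvec_def by (subst Pi_pmf_comp_prob) (auto simp: ts1_def prevt_def)
    also have "\<dots> \<le> real m * h / A\<^sup>2" by (rule poisson_cheb[OF mh A])
    finally show ?thesis .
  qed
  have FG_sub: "(\<Union>j\<in>{..m}. F j \<inter> G j) \<subseteq> {\<omega>\<in>space M. A \<le> \<bar>S m \<omega>\<bar>}"
    by (auto simp: F_def G_def)
  have key: "prob (F j) \<le> 2 * prob (F j \<inter> G j)" if j: "j \<le> m" for j
  proof (cases "j = 0")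
    case True
    have "F j = {}" using True N0 A by (auto simp: F_def S_def)
    thus ?thesis by simp
  next
    case j0: False
    show ?thesis
    proof (cases "j = m")
      case True
      hence "G j = space M" using A by (simp add: G_def)
      hence "F j \<inter> G j = F j" unfolding F_def by blast
      thus ?thesis using measure_nonneg[of M "F j"] by simp
    next
      case False
      hence jm: "j < m" using j by simp
      define ts where "ts = map (\<lambda>l. real (Suc l) * h) [0..<j] @ [real m * h]"
      have len: "length ts = Suc j" by (simp add: ts_def)
      have tsn: "ts ! l = (if l < j then real (Suc l) * h else real m * h)" if "l \<le> j" for l
        using that by (auto simp: ts_def nth_append)
      have s1: "sorted_wrt (<) ts"
        unfolding sorted_wrt_iff_nth_less len
      proof (intro allI impI)
        fix a b assume ab: "a < b" "b < Suc j"
        have "real (Suc a) * h < real m * h" using ab jm h by simp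
        moreover have "real (Suc a) * h < real (Suc b) * h" using ab h by simp
        ultimately show "ts ! a < ts ! b" using ab tsn by auto
      qed
      have s2: "\<forall>t\<in>set ts. 0 < t" using h mh by (auto simp: ts_def)
      have prv: "prevt ts l = real l * h" if "l \<le> j" for l
        using that tsn[of "l - 1"] by (cases l) (auto simp: prevt_def)
      have inc_lt: "real (incvec N ts i0 \<omega> l) = N i0 \<omega> (real (Suc l) * h) - N i0 \<omega> (real l * h)"
        if "\<omega> \<in> space M" "l < j" for \<omega> l
        using incr_nat[OF P finI NP s1 s2 i0 that(1), of l] that tsn[of l] prv[of l] len by simp
      have inc_j: "real (incvec N ts i0 \<omega> j) = N i0 \<omega> (real m * h) - N i0 \<omega> (real j * h)"
        if "\<omega> \<in> space M" for \<omega>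
        using incr_nat[OF P finI NP s1 s2 i0 that, of j] tsn[of j] prv[of j] len by simp
      have Ssum: "S k \<omega> = (\<Sum>l<k. real (incvec N ts i0 \<omega> l)) - real k * h"
        if "\<omega> \<in> space M" "k \<le> j" for \<omega> k
      proof -
        have "(\<Sum>l<k. real (incvec N ts i0 \<omega> l)) = (\<Sum>l<k. N i0 \<omega> (real (Suc l) * h) - N i0 \<omega> (real l * h))"
          using that inc_lt by (intro sum.cong) auto
        also have "\<dots> = N i0 \<omega> (real k * h)"
          using sum_lessThan_telescope[of "\<lambda>l. N i0 \<omega> (real l * h)" k] N0[OF that(1)] by simp
        finally show ?thesis by (simp add: S_def)
      qed
      define R where "R c = ((\<forall>k<j. \<bar>(\<Sum>l<k. real (c l)) - real k * h\<bar> < 2*A)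
                          \<and> 2*A \<le> \<bar>(\<Sum>l<j. real (c l)) - real j * h\<bar>)" for c :: "nat \<Rightarrow> nat"
      define Q where "Q v = (\<bar>real v - (real m - real j) * h\<bar> < A)" for v :: nat
      have Rdep: "R f = R g" if "\<forall>l\<in>{..<j}. f l = g l" for f g
      proof -
        have "(\<Sum>l<k. real (f l)) = (\<Sum>l<k. real (g l))" if "k \<le> j" for k
          using that \<open>\<forall>l\<in>{..<j}. f l = g l\<close> by (intro sum.cong) auto
        thus ?thesis unfolding R_def by (metis le_refl less_imp_le)
      qed
      have SmSj: "S m \<omega> - S j \<omega> = real (incvec N ts i0 \<omega> j) - (real m - real j) * h"
        if "\<omega> \<in> space M" for \<omega>
        using inc_j[OF that] by (simp add: S_def algebra_simps)
      have F_eq: "F j = {\<omega>\<in>space M. incvec N ts i0 \<omega> \<in> {c. R c}}"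
        using Ssum by (auto simp: F_def R_def)
      have G_eq: "G j = {\<omega>\<in>space M. incvec N ts i0 \<omega> \<in> {c. Q (c j)}}"
        using SmSj by (auto simp: G_def Q_def)
      have FG_eq: "F j \<inter> G j = {\<omega>\<in>space M. incvec N ts i0 \<omega> \<in> {c. R c \<and> Q (c j)}}"
        using F_eq G_eq by auto
      have pv: "poisvec ts = Pi_pmf (insert j {..<j}) 0 (\<lambda>l. poisson_pmf (ts ! l - prevt ts l))"
        unfolding poisvec_def len by (simp add: lessThan_Suc)
      have rj: "ts ! j - prevt ts j = (real m - real j) * h"
        using tsn[of j] prv[of j] by (simp add: algebra_simps)
      have rjpos: "0 < (real m - real j) * h" using jm h by simp
      have pFG: "prob (F j \<inter> G j) = prob (F j) * measure_pmf.prob (poisson_pmf ((real m - real j) * h)) {v. Q v}"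
      proof -
        have "prob (F j \<inter> G j) = measure_pmf.prob (poisvec ts) {c. R c \<and> Q (c j)}"
          unfolding FG_eq by (rule law_single[OF P finI NP s1 s2 i0])
        also have "\<dots> = measure_pmf.prob (poisvec ts) {c. R c} * measure_pmf.prob (poisson_pmf (ts ! j - prevt ts j)) {v. Q v}"
          unfolding pv by (rule Pi_pmf_insert_indep) (use Rdep in auto)
        also have "measure_pmf.prob (poisvec ts) {c. R c} = prob (F j)"
          unfolding F_eq by (rule law_single[OF P finI NP s1 s2 i0, symmetric])
        finally show ?thesis using rj by simp
      qed
      have "1/2 \<le> measure_pmf.prob (poisson_pmf ((real m - real j) * h)) {v. Q v}"
        unfolding Q_def
      proof (rule pois_half[OF rjpos A])
        have "(real m - real j) * h \<le> real m * h" using h by simp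
        hence "(real m - real j) * h / A\<^sup>2 \<le> real m * h / A\<^sup>2" using A by (simp add: divide_right_mono)
        thus "(real m - real j) * h / A\<^sup>2 \<le> 1/2" using small by linarith
      qed
      hence "prob (F j) * (1/2) \<le> prob (F j) * measure_pmf.prob (poisson_pmf ((real m - real j) * h)) {v. Q v}"
        using measure_nonneg[of M "F j"] by (rule mult_left_mono)
      thus ?thesis using pFG by linarith
    qed
  qed
  have "prob {\<omega>\<in>space M. \<exists>k\<le>m. 2*A \<le> \<bar>N i0 \<omega> (real k * h) - real k * h\<bar>} = (\<Sum>j\<in>{..m}. prob (F j))"
    using E_eq sumF by simp
  also have "\<dots> \<le> (\<Sum>j\<in>{..m}. 2 * prob (F j \<inter> G j))"
    by (intro sum_mono key) auto
  also have "\<dots> = 2 * prob (\<Union>j\<in>{..m}. F j \<inter> G j)"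
    by (simp add: sumFG sum_distrib_left)
  also have "\<dots> \<le> 2 * prob {\<omega>\<in>space M. A \<le> \<bar>S m \<omega>\<bar>}"
    using FG_sub by (intro mult_left_mono finite_measure_mono) (auto simp: S_def)
  also have "\<dots> \<le> 2 * (real m * h / A\<^sup>2)"
    using cheb_m by simp
  finally show ?thesis .
qed


lemma pw_right_const:
  assumes "pw_const_cadlag f" "0 \<le> t"
  obtains e where "e > 0" "\<And>s. t \<le> s \<Longrightarrow> s < t + e \<Longrightarrow> f s = f t"
proof -
  have "(\<exists>e>0. \<forall>s. t \<le> s \<and> s < t + e \<longrightarrow> f s = f t)"
    using assms unfolding pw_const_cadlag_def by simp
  thus ?thesis using that by auto
qed

lemma pw_left_const:
  assumes "pw_const_cadlag f" "0 < t"
  obtains e c where "e > 0" "\<And>s. t - e < s \<Longrightarrow> s < t \<Longrightarrow> f s = c"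
proof -
  have "\<forall>t\<ge>0. t > 0 \<longrightarrow> (\<exists>e>0. \<exists>c. \<forall>s. t - e < s \<and> s < t \<longrightarrow> f s = c)"
    using assms(1) unfolding pw_const_cadlag_def by blast
  hence "\<exists>e>0. \<exists>c. \<forall>s. t - e < s \<and> s < t \<longrightarrow> f s = c" using assms(2) by simp
  then obtain e c where "e > 0" "\<forall>s. t - e < s \<and> s < t \<longrightarrow> f s = c" by blast
  thus ?thesis using that by blast
qed

lemma pw_comp:
  assumes "pw_const_cadlag f"
  shows "pw_const_cadlag (\<lambda>t. g (f t))"
  unfolding pw_const_cadlag_def
proof (intro allI impI conjI)
  fix t :: real assume t: "0 \<le> t"
  obtain e where e: "e > 0" "\<And>s. t \<le> s \<Longrightarrow> s < t + e \<Longrightarrow> f s = f t"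
    using pw_right_const[OF assms t] by blast
  show "\<exists>e>0. \<forall>s. t \<le> s \<and> s < t + e \<longrightarrow> g (f s) = g (f t)"
  proof (intro exI[of _ e] conjI allI impI)
    fix s assume "t \<le> s \<and> s < t + e"
    hence "f s = f t" using e(2)[of s] by blast
    thus "g (f s) = g (f t)" by simp
  qed (rule e(1))
  assume t0: "0 < t"
  obtain e c where e: "e > 0" "\<And>s. t - e < s \<Longrightarrow> s < t \<Longrightarrow> f s = c"
    using pw_left_const[OF assms t0] by blast
  show "\<exists>e>0. \<exists>c. \<forall>s. t - e < s \<and> s < t \<longrightarrow> g (f s) = c"
  proof (intro exI[of _ e] exI[of _ "g c"] conjI allI impI)
    fix s assume "t - e < s \<and> s < t"
    hence "f s = c" using e(2)[of s] by blast
    thus "g (f s) = g c" by simp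
  qed (rule e(1))
qed

lemma dyadic_approx:
  fixes \<tau> :: real and K :: nat
  assumes "0 \<le> \<tau>"
  shows "\<tau> \<le> real_of_int \<lceil>\<tau> * 2^K\<rceil> / 2^K" "real_of_int \<lceil>\<tau> * 2^K\<rceil> / 2^K < \<tau> + (1/2)^K"
proof -
  have c: "real_of_int \<lceil>\<tau> * 2^K\<rceil> - 1 < \<tau> * 2^K" "\<tau> * 2^K \<le> real_of_int \<lceil>\<tau> * 2^K\<rceil>"
    using ceiling_correct[of "\<tau> * 2^K"] by auto
  show "\<tau> \<le> real_of_int \<lceil>\<tau> * 2^K\<rceil> / 2^K" using c(2) by (simp add: field_simps)
  show "real_of_int \<lceil>\<tau> * 2^K\<rceil> / 2^K < \<tau> + (1/2)^K"
    using c(1) by (simp add: field_simps power_one_over)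
qed

lemma pw_eventually_dyadic:
  assumes "pw_const_cadlag f" "0 \<le> \<tau>"
  shows "eventually (\<lambda>K. f (real_of_int \<lceil>\<tau> * 2^K\<rceil> / 2^K) = f \<tau>) sequentially"
proof -
  obtain e where e: "e > 0" "\<And>s. \<tau> \<le> s \<Longrightarrow> s < \<tau> + e \<Longrightarrow> f s = f \<tau>"
    using pw_right_const[OF assms] by blast
  obtain K0 where K0: "(1/2::real)^K0 < e" using real_arch_pow_inv[OF e(1), of "1/2"] by auto
  show ?thesis unfolding eventually_sequentially
  proof (intro exI allI impI)
    fix K assume "K0 \<le> K"
    hence p: "(1/2::real)^K \<le> (1/2)^K0" by (intro power_decreasing) auto
    show "f (real_of_int \<lceil>\<tau> * 2^K\<rceil> / 2^K) = f \<tau>"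
      by (rule e(2)) (use p dyadic_approx[OF assms(2), of K] K0 in linarith)+
  qed
qed

lemma pw_joint_meas:
  fixes F :: "'a \<Rightarrow> real \<Rightarrow> real"
  assumes Fm: "\<And>t. (\<lambda>\<omega>. F \<omega> t) \<in> borel_measurable M"
    and Fpw: "\<And>\<omega>. \<omega> \<in> space M \<Longrightarrow> pw_const_cadlag (F \<omega>)"
  shows "(\<lambda>x. F (fst x) (max 0 (snd x))) \<in> borel_measurable (M \<Otimes>\<^sub>M lborel)"
proof (rule borel_measurable_LIMSEQ_real)
  let ?A = "\<lambda>K x. F (fst x) (real_of_int \<lceil>max 0 (snd x) * (2::real)^K\<rceil> / 2^K)"
  show "?A K \<in> borel_measurable (M \<Otimes>\<^sub>M lborel)" for K
  proof (rule measurable_compose_countable[where f = "\<lambda>z x. F (fst x) (real_of_int z / 2^K)"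
        and g = "\<lambda>x. \<lceil>max 0 (snd x) * (2::real)^K\<rceil>"])
    show "(\<lambda>x. F (fst x) (real_of_int z / 2 ^ K)) \<in> borel_measurable (M \<Otimes>\<^sub>M lborel)" for z
      by (rule measurable_compose[OF measurable_fst Fm])
    show "(\<lambda>x. \<lceil>max 0 (snd x) * (2::real) ^ K\<rceil>) \<in> M \<Otimes>\<^sub>M lborel \<rightarrow>\<^sub>M count_space UNIV"
      by measurable
  qed
  fix x :: "'a \<times> real" assume x: "x \<in> space (M \<Otimes>\<^sub>M lborel)"
  hence "fst x \<in> space M" by (auto simp: space_pair_measure)
  hence "eventually (\<lambda>K. ?A K x = F (fst x) (max 0 (snd x))) sequentially"
    using pw_eventually_dyadic[OF Fpw, of "fst x" "max 0 (snd x)"] by simp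
  thus "(\<lambda>K. ?A K x) \<longlonglongrightarrow> F (fst x) (max 0 (snd x))"
    by (rule tendsto_eventually)
qed

lemma pw_path_meas:
  fixes F :: "'a \<Rightarrow> real \<Rightarrow> real"
  assumes Fm: "\<And>t. (\<lambda>\<omega>. F \<omega> t) \<in> borel_measurable M"
    and Fpw: "\<And>\<omega>. \<omega> \<in> space M \<Longrightarrow> pw_const_cadlag (F \<omega>)"
    and w: "\<omega> \<in> space M"
  shows "(\<lambda>\<tau>. F \<omega> (max 0 \<tau>)) \<in> borel_measurable lborel"
  using measurable_Pair2[OF pw_joint_meas[OF Fm Fpw] w] by simp

lemma bounded_meas_integrable:
  fixes f :: "real \<Rightarrow> real"
  assumes fm: "(\<lambda>\<tau>. f (max 0 \<tau>)) \<in> borel_measurable lborel"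
    and bnd: "\<And>\<tau>. 0 \<le> \<tau> \<Longrightarrow> \<bar>f \<tau>\<bar> \<le> B" and t: "0 \<le> t"
  shows "f integrable_on {0..t}"
    and "integral {0..t} f = (LINT \<tau>:{0..t}|lborel. f (max 0 \<tau>))"
proof -
  have si: "set_integrable lborel {0..t} (\<lambda>\<tau>. f (max 0 \<tau>))"
    unfolding set_integrable_def
  proof (rule integrableI_bounded_set_indicator[where B = B])
    show "{0..t} \<in> sets lborel" by simp
    show "(\<lambda>\<tau>. f (max 0 \<tau>)) \<in> borel_measurable lborel" by (rule fm)
    show "emeasure lborel {0..t} < \<infinity>" using t by simp
    show "AE x in lborel. x \<in> {0..t} \<longrightarrow> norm (f (max 0 x)) \<le> B"
    proof (rule AE_I2, rule impI)
      fix x :: real assume "x \<in> {0..t}"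
      show "norm (f (max 0 x)) \<le> B" using bnd[of "max 0 x"] by simp
    qed
  qed
  have eq: "f (max 0 \<tau>) = f \<tau>" if "\<tau> \<in> {0..t}" for \<tau>
  proof -
    have "max 0 \<tau> = \<tau>" using that by simp
    thus ?thesis by (rule arg_cong)
  qed
  have "(\<lambda>\<tau>. f (max 0 \<tau>)) integrable_on {0..t}" by (rule set_borel_integral_eq_integral(1)[OF si])
  thus "f integrable_on {0..t}" by (subst (asm) Henstock_Kurzweil_Integration.integrable_cong[OF eq])
  have "integral {0..t} f = integral {0..t} (\<lambda>\<tau>. f (max 0 \<tau>))"
    by (rule Henstock_Kurzweil_Integration.integral_cong[OF eq, symmetric])
  also have "\<dots> = (LINT \<tau>:{0..t}|lborel. f (max 0 \<tau>))"
    by (rule set_borel_integral_eq_integral(2)[OF si, symmetric])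
  finally show "integral {0..t} f = (LINT \<tau>:{0..t}|lborel. f (max 0 \<tau>))" .
qed

lemma param_integral_meas:
  fixes F :: "'a \<Rightarrow> real \<Rightarrow> real"
  assumes Fm: "\<And>t. (\<lambda>\<omega>. F \<omega> t) \<in> borel_measurable M"
    and Fpw: "\<And>\<omega>. \<omega> \<in> space M \<Longrightarrow> pw_const_cadlag (F \<omega>)"
    and bnd: "\<And>\<omega> \<tau>. \<omega> \<in> space M \<Longrightarrow> 0 \<le> \<tau> \<Longrightarrow> \<bar>F \<omega> \<tau>\<bar> \<le> B"
    and t: "0 \<le> t"
  shows "(\<lambda>\<omega>. integral {0..t} (F \<omega>)) \<in> borel_measurable M"
proof -
  have jm: "(\<lambda>x. F (fst x) (max 0 (snd x))) \<in> borel_measurable (M \<Otimes>\<^sub>M lborel)"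
    by (rule pw_joint_meas[OF Fm Fpw])
  have lm: "(\<lambda>\<omega>. LINT \<tau>:{0..t}|lborel. F \<omega> (max 0 \<tau>)) \<in> borel_measurable M"
    unfolding set_lebesgue_integral_def
  proof (rule lborel.borel_measurable_lebesgue_integral)
    have "(\<lambda>x. indicator {0..t} (snd x) *\<^sub>R F (fst x) (max 0 (snd x))) \<in> borel_measurable (M \<Otimes>\<^sub>M lborel)"
      by (rule borel_measurable_scaleR[OF measurable_compose[OF measurable_snd borel_measurable_indicator] jm]) simp
    thus "(\<lambda>(x, y). indicat_real {0..t} y *\<^sub>R F x (max 0 y)) \<in> borel_measurable (M \<Otimes>\<^sub>M lborel)"
      by (simp add: case_prod_beta')
  qed
  have eqI: "integral {0..t} (F \<omega>) = (LINT \<tau>:{0..t}|lborel. F \<omega> (max 0 \<tau>))" if w: "\<omega> \<in> space M" for \<omega>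
    by (rule bounded_meas_integrable(2)[OF pw_path_meas[OF Fm Fpw w] bnd[OF w] t])
  show ?thesis by (subst measurable_cong[OF eqI]) (assumption, rule lm)
qed


lemma pw_meas_single:
  fixes f :: "real \<Rightarrow> real"
  assumes "pw_const_cadlag f"
  shows "(\<lambda>\<tau>. f (max 0 \<tau>)) \<in> borel_measurable lborel"
  using pw_path_meas[where M = "count_space (UNIV :: unit set)" and F = "\<lambda>_. f" and \<omega> = "()"] assms
  by simp

lemma pw_integrable:
  fixes f :: "real \<Rightarrow> real"
  assumes "pw_const_cadlag f" "\<And>\<tau>. 0 \<le> \<tau> \<Longrightarrow> \<bar>f \<tau>\<bar> \<le> B" "0 \<le> t"
  shows "f integrable_on {0..t}"
  by (rule bounded_meas_integrable(1)[OF pw_meas_single[OF assms(1)] assms(2,3)])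

lemma rfun_bounds: "0 \<le> rfun \<beta> x" "rfun \<beta> x \<le> 1"
proof -
  have "0 \<le> rfun \<beta> x \<and> rfun \<beta> x \<le> 1"
  proof (cases "\<beta> = \<infinity>")
    case True thus ?thesis by (simp add: rfun_def)
  next
    case False
    have "0 < 1 + exp (real_of_ereal \<beta> * x)" by (simp add: add_pos_pos)
    moreover have "1 / (1 + exp (real_of_ereal \<beta> * x)) \<le> 1" by (simp add: divide_le_eq_1 add_pos_pos)
    ultimately show ?thesis using False by (simp add: rfun_def)
  qed
  thus "0 \<le> rfun \<beta> x" "rfun \<beta> x \<le> 1" by auto
qed

lemma card_comm: "card (comm V1 V2 k) = csize V1 V2 k"
  by (simp add: comm_def csize_def)

lemma comm_sub: "comm V1 V2 k \<subseteq> nodes V1 V2"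
  by (auto simp: comm_def nodes_def)

lemma finite_comm: "finite (comm V1 V2 k)"
  by (simp add: comm_def)

definition Ipath :: "nat \<Rightarrow> nat \<Rightarrow> real \<Rightarrow> ereal \<Rightarrow> (nat \<Rightarrow> nat \<Rightarrow> bool) \<Rightarrow> (real \<Rightarrow> nat \<Rightarrow> real)
                      \<Rightarrow> nat \<Rightarrow> bool \<Rightarrow> real \<Rightarrow> real" where
  "Ipath V1 V2 al \<beta> g s k sg \<tau> = (\<Sum>u\<in>comm V1 V2 k.
        if s \<tau> u = (if sg then 1 else -1) then frate V1 V2 al \<beta> g s \<tau> u else 0)"

definition Ispath :: "nat \<Rightarrow> nat \<Rightarrow> real \<Rightarrow> ereal \<Rightarrow> (nat \<Rightarrow> nat \<Rightarrow> bool) \<Rightarrow> (real \<Rightarrow> nat \<Rightarrow> real)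
                      \<Rightarrow> nat \<Rightarrow> real \<Rightarrow> real" where
  "Ispath V1 V2 al \<beta> g s k \<tau> = (\<Sum>u\<in>comm V1 V2 k. s \<tau> u * frate V1 V2 al \<beta> g s \<tau> u)"

lemma icum_Ipath: "icum V1 V2 al \<beta> g s k sg t = integral {0..t} (Ipath V1 V2 al \<beta> g s k sg)"
  unfolding icum_def Ipath_def by simp

lemma Mproc_eq: "Mproc V1 V2 al \<beta> g s Np k t =
     Np k True (icum V1 V2 al \<beta> g s k False t) - Np k False (icum V1 V2 al \<beta> g s k True t)
     + integral {0..t} (Ispath V1 V2 al \<beta> g s k)"
  unfolding Mproc_def Ispath_def by simp

lemma Ipath_bounds: "0 \<le> Ipath V1 V2 al \<beta> g s k sg \<tau>" "Ipath V1 V2 al \<beta> g s k sg \<tau> \<le> real (csize V1 V2 k)"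
proof -
  have "0 \<le> Ipath V1 V2 al \<beta> g s k sg \<tau>"
    unfolding Ipath_def frate_def by (intro sum_nonneg) (simp add: rfun_bounds)
  moreover have "Ipath V1 V2 al \<beta> g s k sg \<tau> \<le> (\<Sum>u\<in>comm V1 V2 k. 1)"
    unfolding Ipath_def frate_def by (intro sum_mono) (simp add: rfun_bounds)
  ultimately show "0 \<le> Ipath V1 V2 al \<beta> g s k sg \<tau>" "Ipath V1 V2 al \<beta> g s k sg \<tau> \<le> real (csize V1 V2 k)"
    by (simp_all add: card_comm)
qed

lemma Ispath_split:
  assumes "\<forall>u\<in>nodes V1 V2. s \<tau> u = 1 \<or> s \<tau> u = -1"
  shows "Ispath V1 V2 al \<beta> g s k \<tau> = Ipath V1 V2 al \<beta> g s k True \<tau> - Ipath V1 V2 al \<beta> g s k False \<tau>"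
proof -
  have "Ispath V1 V2 al \<beta> g s k \<tau> = (\<Sum>u\<in>comm V1 V2 k.
        (if s \<tau> u = 1 then frate V1 V2 al \<beta> g s \<tau> u else 0) - (if s \<tau> u = -1 then frate V1 V2 al \<beta> g s \<tau> u else 0))"
    unfolding Ispath_def
  proof (rule sum.cong[OF refl])
    fix u assume "u \<in> comm V1 V2 k"
    hence "s \<tau> u = 1 \<or> s \<tau> u = -1" using assms comm_sub by blast
    thus "s \<tau> u * frate V1 V2 al \<beta> g s \<tau> u =
        (if s \<tau> u = 1 then frate V1 V2 al \<beta> g s \<tau> u else 0) - (if s \<tau> u = -1 then frate V1 V2 al \<beta> g s \<tau> u else 0)"
      by auto
  qed
  thus ?thesis unfolding Ipath_def by (simp add: sum_subtractf)
qed

lemma Ipath_pw: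
  assumes "pw_const_cadlag s"
  shows "pw_const_cadlag (Ipath V1 V2 al \<beta> g s k sg)"
proof -
  have "Ipath V1 V2 al \<beta> g s k sg = (\<lambda>\<tau>. (\<lambda>x. \<Sum>u\<in>comm V1 V2 k.
        if x u = (if sg then 1 else -1) then rfun \<beta> (Delta V1 V2 g al x u) else 0) (s \<tau>))"
    unfolding Ipath_def frate_def by (rule ext) simp
  thus ?thesis by (simp only:) (rule pw_comp[OF assms])
qed

lemma Ispath_pw:
  assumes "pw_const_cadlag s"
  shows "pw_const_cadlag (Ispath V1 V2 al \<beta> g s k)"
proof -
  have "Ispath V1 V2 al \<beta> g s k = (\<lambda>\<tau>. (\<lambda>x. \<Sum>u\<in>comm V1 V2 k.
        x u * rfun \<beta> (Delta V1 V2 g al x u)) (s \<tau>))"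
    unfolding Ispath_def frate_def by (rule ext) simp
  thus ?thesis by (simp only:) (rule pw_comp[OF assms])
qed

lemma Ipath_int:
  assumes "pw_const_cadlag s" "0 \<le> t"
  shows "Ipath V1 V2 al \<beta> g s k sg integrable_on {0..t}"
  by (rule pw_integrable[OF Ipath_pw[OF assms(1)] _ assms(2), where B = "real (csize V1 V2 k)"])
     (use Ipath_bounds in auto)

lemma icum_bounds:
  assumes "pw_const_cadlag s" "0 \<le> t"
  shows "0 \<le> icum V1 V2 al \<beta> g s k sg t" "icum V1 V2 al \<beta> g s k sg t \<le> real (csize V1 V2 k) * t"
proof -
  note int = Ipath_int[OF assms, of V1 V2 al \<beta> g k sg]
  show "0 \<le> icum V1 V2 al \<beta> g s k sg t"
    unfolding icum_Ipath by (rule integral_nonneg[OF int]) (simp add: Ipath_bounds)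
  have "icum V1 V2 al \<beta> g s k sg t \<le> integral {0..t} (\<lambda>_. real (csize V1 V2 k))"
    unfolding icum_Ipath by (rule integral_le[OF int]) (auto simp: Ipath_bounds)
  thus "icum V1 V2 al \<beta> g s k sg t \<le> real (csize V1 V2 k) * t" using assms(2) by (simp add: mult.commute)
qed

lemma icum_mono:
  assumes "pw_const_cadlag s" "0 \<le> t" "t \<le> t'"
  shows "icum V1 V2 al \<beta> g s k sg t \<le> icum V1 V2 al \<beta> g s k sg t'"
  unfolding icum_Ipath
proof (rule integral_subset_le)
  show "{0..t} \<subseteq> {0..t'}" using assms by auto
  show "Ipath V1 V2 al \<beta> g s k sg integrable_on {0..t}" by (rule Ipath_int[OF assms(1,2)])
  show "Ipath V1 V2 al \<beta> g s k sg integrable_on {0..t'}" by (rule Ipath_int[OF assms(1)]) (use assms in auto)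
  show "\<forall>x\<in>{0..t'}. 0 \<le> Ipath V1 V2 al \<beta> g s k sg x" by (simp add: Ipath_bounds)
qed

lemma icum_cont:
  assumes "pw_const_cadlag s" "0 \<le> T"
  shows "continuous_on {0..T} (icum V1 V2 al \<beta> g s k sg)"
  unfolding icum_Ipath[abs_def]
  by (rule indefinite_integral_continuous_1[OF Ipath_int[OF assms]])

lemma int_Ispath:
  assumes "pw_const_cadlag s" "0 \<le> t" "\<forall>\<tau>\<ge>0. \<forall>u\<in>nodes V1 V2. s \<tau> u = 1 \<or> s \<tau> u = -1"
  shows "integral {0..t} (Ispath V1 V2 al \<beta> g s k) = icum V1 V2 al \<beta> g s k True t - icum V1 V2 al \<beta> g s k False t"
proof -
  have "integral {0..t} (Ispath V1 V2 al \<beta> g s k)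
      = integral {0..t} (\<lambda>\<tau>. Ipath V1 V2 al \<beta> g s k True \<tau> - Ipath V1 V2 al \<beta> g s k False \<tau>)"
    by (rule Henstock_Kurzweil_Integration.integral_cong) (use assms(3) Ispath_split in auto)
  also have "\<dots> = integral {0..t} (Ipath V1 V2 al \<beta> g s k True) - integral {0..t} (Ipath V1 V2 al \<beta> g s k False)"
    by (rule integral_diff[OF Ipath_int[OF assms(1,2)] Ipath_int[OF assms(1,2)]])
  finally show ?thesis by (simp add: icum_Ipath)
qed


lemma grid_bound:
  fixes f :: "real \<Rightarrow> real"
  assumes mono: "mono_on {0..} f" and h: "0 < h" and xb: "0 \<le> x" "x \<le> real m * h"
    and good: "\<forall>j\<le>m. \<bar>f (real j * h) - real j * h\<bar> < B"
  shows "\<bar>f x - x\<bar> \<le> B + h"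
proof -
  define j where "j = nat \<lfloor>x / h\<rfloor>"
  have xh: "0 \<le> x / h" using xb h by simp
  have j1: "real j \<le> x / h" "x / h < real j + 1"
    using xh by (simp_all add: j_def)
  have jl: "real j * h \<le> x" using j1(1) h by (simp add: field_simps)
  have ju: "x < (real j + 1) * h" using j1(2) h by (simp add: field_simps)
  show ?thesis
  proof (cases "j < m")
    case True
    have a: "f (real j * h) \<le> f x"
      by (rule mono_onD[OF mono]) (use jl h xb in auto)
    have b: "f x \<le> f (real (Suc j) * h)"
      by (rule mono_onD[OF mono]) (use ju xb h in \<open>auto simp: algebra_simps\<close>)
    have g1: "\<bar>f (real j * h) - real j * h\<bar> < B" using good True by simp
    have g2: "\<bar>f (real (Suc j) * h) - real (Suc j) * h\<bar> < B" using good[rule_format, of "Suc j"] True by linarith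
    have "real (Suc j) * h = real j * h + h" by (simp add: algebra_simps)
    thus ?thesis using a b g1 g2 jl ju by (simp add: abs_le_iff abs_less_iff algebra_simps)
  next
    case False
    hence "real m * h \<le> real j * h" using h by simp
    hence "x = real m * h" using jl xb by linarith
    thus ?thesis using good h by force
  qed
qed

definition rc :: "(real \<Rightarrow> real) \<Rightarrow> real \<Rightarrow> bool" where
  "rc f t \<longleftrightarrow> (\<forall>e>0. \<exists>d>0. \<forall>s. t < s \<and> s < t + d \<longrightarrow> \<bar>f s - f t\<bar> < e)"

lemma rc_cont:
  assumes "continuous_on {0..T} f" "0 \<le> t" "t < T"
  shows "rc f t"
  unfolding rc_def
proof (intro allI impI)
  fix e :: real assume e: "0 < e"
  obtain d where d: "d > 0" "\<forall>x'\<in>{0..T}. dist x' t < d \<longrightarrow> dist (f x') (f t) < e"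
    using assms(1) e assms(2,3) unfolding continuous_on_iff by (meson atLeastAtMost_iff less_imp_le)
  show "\<exists>d>0. \<forall>s. t < s \<and> s < t + d \<longrightarrow> \<bar>f s - f t\<bar> < e"
  proof (intro exI[of _ "min d (T - t)"] conjI allI impI)
    show "0 < min d (T - t)" using d assms by simp
    fix s assume s: "t < s \<and> s < t + min d (T - t)"
    hence "s \<in> {0..T}" "dist s t < d" using assms by (auto simp: dist_real_def)
    thus "\<bar>f s - f t\<bar> < e" using d(2) by (auto simp: dist_real_def)
  qed
qed

lemma rc_comp_pw:
  assumes g: "pw_const_cadlag g" and f: "rc f t" and fm: "\<And>s. t < s \<Longrightarrow> f t \<le> f s" and f0: "0 \<le> f t"
  shows "rc (\<lambda>s. g (f s)) t"
  unfolding rc_def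
proof (intro allI impI)
  fix e :: real assume e: "0 < e"
  obtain e0 where e0: "e0 > 0" "\<And>y. f t \<le> y \<Longrightarrow> y < f t + e0 \<Longrightarrow> g y = g (f t)"
    using pw_right_const[OF g f0] by blast
  obtain d where d: "d > 0" "\<forall>s. t < s \<and> s < t + d \<longrightarrow> \<bar>f s - f t\<bar> < e0"
    using f e0(1) unfolding rc_def by blast
  show "\<exists>d>0. \<forall>s. t < s \<and> s < t + d \<longrightarrow> \<bar>g (f s) - g (f t)\<bar> < e"
  proof (intro exI[of _ d] conjI allI impI)
    fix s assume s: "t < s \<and> s < t + d"
    have "f t \<le> f s" using fm s by simp
    moreover have "f s < f t + e0" using d(2) s by force
    ultimately have "g (f s) = g (f t)" by (rule e0(2))
    thus "\<bar>g (f s) - g (f t)\<bar> < e" using e by simp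
  qed (rule d(1))
qed

lemma rc_combine:
  assumes "rc f1 t" "rc f2 t" "rc f3 t" "rc f4 t"
  shows "rc (\<lambda>s. f1 s - f2 s + (f3 s - f4 s)) t"
  unfolding rc_def
proof (intro allI impI)
  fix e :: real assume e: "0 < e"
  have e4: "0 < e/4" using e by simp
  obtain d1 where d1: "d1 > 0" "\<forall>s. t < s \<and> s < t + d1 \<longrightarrow> \<bar>f1 s - f1 t\<bar> < e/4"
    using assms(1) e4 unfolding rc_def by blast
  obtain d2 where d2: "d2 > 0" "\<forall>s. t < s \<and> s < t + d2 \<longrightarrow> \<bar>f2 s - f2 t\<bar> < e/4"
    using assms(2) e4 unfolding rc_def by blast
  obtain d3 where d3: "d3 > 0" "\<forall>s. t < s \<and> s < t + d3 \<longrightarrow> \<bar>f3 s - f3 t\<bar> < e/4"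
    using assms(3) e4 unfolding rc_def by blast
  obtain d4 where d4: "d4 > 0" "\<forall>s. t < s \<and> s < t + d4 \<longrightarrow> \<bar>f4 s - f4 t\<bar> < e/4"
    using assms(4) e4 unfolding rc_def by blast
  show "\<exists>d>0. \<forall>s. t < s \<and> s < t + d \<longrightarrow> \<bar>f1 s - f2 s + (f3 s - f4 s) - (f1 t - f2 t + (f3 t - f4 t))\<bar> < e"
  proof (intro exI[of _ "min (min d1 d2) (min d3 d4)"] conjI allI impI)
    show "0 < min (min d1 d2) (min d3 d4)" using d1 d2 d3 d4 by simp
    fix s assume s: "t < s \<and> s < t + min (min d1 d2) (min d3 d4)"
    have s1: "t < s" "s < t + d1" "s < t + d2" "s < t + d3" "s < t + d4" using s by auto
    have "\<bar>f1 s - f1 t\<bar> < e/4" using d1(2) s1(1,2) by blast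
    moreover have "\<bar>f2 s - f2 t\<bar> < e/4" using d2(2) s1(1,3) by blast
    moreover have "\<bar>f3 s - f3 t\<bar> < e/4" using d3(2) s1(1,4) by blast
    moreover have "\<bar>f4 s - f4 t\<bar> < e/4" using d4(2) s1(1,5) by blast
    ultimately show "\<bar>f1 s - f2 s + (f3 s - f4 s) - (f1 t - f2 t + (f3 t - f4 t))\<bar> < e" by linarith
  qed
qed

lemma rc_cong:
  assumes "rc f t" "\<And>s. t \<le> s \<Longrightarrow> f s = g s"
  shows "rc g t"
  unfolding rc_def
proof (intro allI impI)
  fix e :: real assume "0 < e"
  then obtain d where d: "d > 0" "\<forall>s. t < s \<and> s < t + d \<longrightarrow> \<bar>f s - f t\<bar> < e"
    using assms(1) unfolding rc_def by blast
  have gt: "g t = f t" using assms(2)[of t] by simp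
  show "\<exists>d>0. \<forall>s. t < s \<and> s < t + d \<longrightarrow> \<bar>g s - g t\<bar> < e"
  proof (intro exI[of _ d] conjI allI impI)
    fix s assume s: "t < s \<and> s < t + d"
    have "g s = f s" using assms(2)[of s] s by simp
    thus "\<bar>g s - g t\<bar> < e" using d(2) s gt by simp
  qed (rule d(1))
qed

lemma rc_scale_abs:
  assumes "rc f t" "0 \<le> c"
  shows "rc (\<lambda>s. c * \<bar>f s\<bar>) t"
  unfolding rc_def
proof (intro allI impI)
  fix e :: real assume e: "0 < e"
  obtain d where d: "d > 0" "\<forall>s. t < s \<and> s < t + d \<longrightarrow> \<bar>f s - f t\<bar> < e / (c + 1)"
  proof -
    have "0 < e / (c + 1)" using e assms(2) by simp
    thus ?thesis using assms(1) that unfolding rc_def by blast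
  qed
  show "\<exists>d>0. \<forall>s. t < s \<and> s < t + d \<longrightarrow> \<bar>c * \<bar>f s\<bar> - c * \<bar>f t\<bar>\<bar> < e"
  proof (intro exI[of _ d] conjI allI impI)
    fix s assume s: "t < s \<and> s < t + d"
    have a: "\<bar>f s - f t\<bar> < e / (c + 1)" using d(2) s by blast
    have "\<bar>c * \<bar>f s\<bar> - c * \<bar>f t\<bar>\<bar> = c * \<bar>\<bar>f s\<bar> - \<bar>f t\<bar>\<bar>"
      using assms(2) by (simp add: abs_mult right_diff_distrib[symmetric])
    also have "\<dots> \<le> c * \<bar>f s - f t\<bar>"
      using assms(2) by (intro mult_left_mono) (simp_all add: abs_triangle_ineq3)
    also have "\<dots> \<le> c * (e / (c + 1))" using a assms(2) by (intro mult_left_mono) auto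
    also have "\<dots> < e" using e assms(2) by (simp add: field_simps)
    finally show "\<bar>c * \<bar>f s\<bar> - c * \<bar>f t\<bar>\<bar> < e" .
  qed (rule d(1))
qed

lemma rc_norm_pair:
  assumes "rc f t" "rc g t"
  shows "rc (\<lambda>s. norm (f s, g s)) t"
  unfolding rc_def
proof (intro allI impI)
  fix e :: real assume e: "0 < e"
  obtain d1 where d1: "d1 > 0" "\<forall>s. t < s \<and> s < t + d1 \<longrightarrow> \<bar>f s - f t\<bar> < e/2"
    using assms(1) e unfolding rc_def by (metis half_gt_zero)
  obtain d2 where d2: "d2 > 0" "\<forall>s. t < s \<and> s < t + d2 \<longrightarrow> \<bar>g s - g t\<bar> < e/2"
    using assms(2) e unfolding rc_def by (metis half_gt_zero)
  show "\<exists>d>0. \<forall>s. t < s \<and> s < t + d \<longrightarrow> \<bar>norm (f s, g s) - norm (f t, g t)\<bar> < e"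
  proof (intro exI[of _ "min d1 d2"] conjI allI impI)
    show "0 < min d1 d2" using d1 d2 by simp
    fix s assume s: "t < s \<and> s < t + min d1 d2"
    have "\<bar>norm (f s, g s) - norm (f t, g t)\<bar> \<le> norm ((f s, g s) - (f t, g t))"
      by (rule norm_triangle_ineq3)
    also have "\<dots> = norm (f s - f t, g s - g t)" by simp
    also have "\<dots> \<le> norm (f s - f t) + norm (g s - g t)" by (rule norm_Pair_le)
    also have "\<dots> < e"
    proof -
      have "t < s" "s < t + d1" "s < t + d2" using s by auto
      hence "\<bar>f s - f t\<bar> < e/2" "\<bar>g s - g t\<bar> < e/2" using d1(2) d2(2) by blast+
      thus ?thesis by simp
    qed
    finally show "\<bar>norm (f s, g s) - norm (f t, g t)\<bar> < e" .
  qed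
qed

lemma sup_countable_eq:
  fixes \<phi> :: "real \<Rightarrow> real"
  assumes T: "0 \<le> T" and bdd: "\<And>t. t \<in> {0..T} \<Longrightarrow> \<bar>\<phi> t\<bar> \<le> Bd"
    and rcs: "\<And>t. 0 \<le> t \<Longrightarrow> t < T \<Longrightarrow> rc \<phi> t"
  shows "(SUP t\<in>{0..T}. \<phi> t) = (SUP t\<in>({0..T} \<inter> \<rat>) \<union> {T}. \<phi> t)"
proof (rule antisym)
  let ?D = "({0..T} \<inter> \<rat>) \<union> {T}"
  have bD: "bdd_above (\<phi> ` ?D)"
    using bdd T by (intro bdd_aboveI[of _ Bd]) (auto simp: abs_le_iff)
  have bI: "bdd_above (\<phi> ` {0..T})"
    using bdd by (intro bdd_aboveI[of _ Bd]) (auto simp: abs_le_iff)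
  show "(SUP t\<in>{0..T}. \<phi> t) \<le> (SUP t\<in>?D. \<phi> t)"
  proof (rule cSUP_least)
    show "{0..T} \<noteq> {}" using T by simp
    fix t assume t: "t \<in> {0..T}"
    show "\<phi> t \<le> (SUP t\<in>?D. \<phi> t)"
    proof (cases "t = T")
      case True thus ?thesis using bD by (intro cSUP_upper) auto
    next
      case False
      hence tT: "t < T" "0 \<le> t" using t by auto
      show ?thesis
      proof (rule ccontr)
        assume "\<not> \<phi> t \<le> (SUP t\<in>?D. \<phi> t)"
        hence e: "0 < \<phi> t - (SUP t\<in>?D. \<phi> t)" by simp
        obtain d where d: "d > 0" "\<forall>s. t < s \<and> s < t + d \<longrightarrow> \<bar>\<phi> s - \<phi> t\<bar> < \<phi> t - (SUP t\<in>?D. \<phi> t)"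
          using rcs[OF tT(2,1)] e unfolding rc_def by blast
        obtain q where q: "q \<in> \<rat>" "t < q" "q < min (t + d) T"
          using Rats_dense_in_real[of t "min (t + d) T"] tT d by auto
        have "q \<in> ?D" using q tT by auto
        hence "\<phi> q \<le> (SUP t\<in>?D. \<phi> t)" using bD by (intro cSUP_upper) auto
        moreover have "\<bar>\<phi> q - \<phi> t\<bar> < \<phi> t - (SUP t\<in>?D. \<phi> t)" using d q by auto
        ultimately show False by linarith
      qed
    qed
  qed
  show "(SUP t\<in>?D. \<phi> t) \<le> (SUP t\<in>{0..T}. \<phi> t)"
    by (rule cSUP_subset_mono) (use T bI in auto)
qed


lemma Ispath_abs:
  assumes "\<forall>u\<in>nodes V1 V2. s \<tau> u = 1 \<or> s \<tau> u = -1"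
  shows "\<bar>Ispath V1 V2 al \<beta> g s k \<tau>\<bar> \<le> real (csize V1 V2 k)"
proof -
  have "Ispath V1 V2 al \<beta> g s k \<tau> = Ipath V1 V2 al \<beta> g s k True \<tau> - Ipath V1 V2 al \<beta> g s k False \<tau>"
    by (rule Ispath_split) (rule assms)
  thus ?thesis using Ipath_bounds[of V1 V2 al \<beta> g s k True \<tau>] Ipath_bounds[of V1 V2 al \<beta> g s k False \<tau>]
    by (simp add: abs_le_iff)
qed

context
  fixes V1 V2 :: nat and al :: real and \<beta> :: ereal and g :: "nat \<Rightarrow> nat \<Rightarrow> bool"
    and s :: "real \<Rightarrow> nat \<Rightarrow> real" and Np :: "nat \<Rightarrow> bool \<Rightarrow> real \<Rightarrow> real" and k :: nat
  assumes spw: "pw_const_cadlag s"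
    and sval: "\<forall>\<tau>\<ge>0. \<forall>u\<in>nodes V1 V2. s \<tau> u = 1 \<or> s \<tau> u = -1"
    and Npm: "\<And>b. mono_on {0..} (Np k b)"
    and Nnn: "\<And>b x. 0 \<le> x \<Longrightarrow> 0 \<le> Np k b x"
    and Npw: "\<And>b. pw_const_cadlag (Np k b)"
begin

lemma Mproc_decomp:
  assumes t: "0 \<le> t"
  shows "Mproc V1 V2 al \<beta> g s Np k t =
    (Np k True (icum V1 V2 al \<beta> g s k False t) - icum V1 V2 al \<beta> g s k False t)
    - (Np k False (icum V1 V2 al \<beta> g s k True t) - icum V1 V2 al \<beta> g s k True t)"
  unfolding Mproc_eq int_Ispath[OF spw t sval] by simp

lemma Mproc_bound:
  assumes h: "0 < h" and mh: "real m * h = real (csize V1 V2 k) * T"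
    and t: "0 \<le> t" "t \<le> T"
    and good: "\<And>b. \<forall>j\<le>m. \<bar>Np k b (real j * h) - real j * h\<bar> < B"
  shows "\<bar>Mproc V1 V2 al \<beta> g s Np k t\<bar> \<le> 2 * (B + h)"
proof -
  have V: "0 \<le> real (csize V1 V2 k)" by simp
  have lim: "x \<le> real m * h" if "x \<le> real (csize V1 V2 k) * t" for x
  proof -
    have "real (csize V1 V2 k) * t \<le> real (csize V1 V2 k) * T" using t V by (intro mult_left_mono) auto
    thus ?thesis using that mh by linarith
  qed
  have b1: "\<bar>Np k True (icum V1 V2 al \<beta> g s k False t) - icum V1 V2 al \<beta> g s k False t\<bar> \<le> B + h"
    by (rule grid_bound[OF Npm h icum_bounds(1)[OF spw t(1)] lim[OF icum_bounds(2)[OF spw t(1)]] good])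
  have b2: "\<bar>Np k False (icum V1 V2 al \<beta> g s k True t) - icum V1 V2 al \<beta> g s k True t\<bar> \<le> B + h"
    by (rule grid_bound[OF Npm h icum_bounds(1)[OF spw t(1)] lim[OF icum_bounds(2)[OF spw t(1)]] good])
  show ?thesis unfolding Mproc_decomp[OF t(1)] using b1 b2 abs_triangle_ineq4 order_trans
    by (smt (verit))
qed

lemma Mproc_bdd:
  assumes t: "0 \<le> t" "t \<le> T"
  shows "\<bar>Mproc V1 V2 al \<beta> g s Np k t\<bar> \<le>
     Np k True (real (csize V1 V2 k) * T) + Np k False (real (csize V1 V2 k) * T) + 2 * (real (csize V1 V2 k) * T)"
proof -
  have V: "0 \<le> real (csize V1 V2 k)" by simp
  have VtT: "real (csize V1 V2 k) * t \<le> real (csize V1 V2 k) * T" using t V by (intro mult_left_mono) auto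
  have one: "\<bar>Np k b (icum V1 V2 al \<beta> g s k b' t) - icum V1 V2 al \<beta> g s k b' t\<bar>
      \<le> Np k b (real (csize V1 V2 k) * T) + real (csize V1 V2 k) * T" for b b'
  proof -
    have i0: "0 \<le> icum V1 V2 al \<beta> g s k b' t" by (rule icum_bounds(1)[OF spw t(1)])
    have i1: "icum V1 V2 al \<beta> g s k b' t \<le> real (csize V1 V2 k) * T"
      using icum_bounds(2)[OF spw t(1), of V1 V2 al \<beta> g k b'] VtT by linarith
    have "Np k b (icum V1 V2 al \<beta> g s k b' t) \<le> Np k b (real (csize V1 V2 k) * T)"
      by (rule mono_onD[OF Npm]) (use i0 i1 in auto)
    moreover have "0 \<le> Np k b (icum V1 V2 al \<beta> g s k b' t)" by (rule Nnn[OF i0])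
    ultimately show ?thesis using i0 i1 by (simp add: abs_le_iff)
  qed
  show ?thesis unfolding Mproc_decomp[OF t(1)] using one[of True False] one[of False True] abs_triangle_ineq4
    by (smt (verit))
qed

lemma icum_rc:
  assumes t: "0 \<le> t"
  shows "rc (icum V1 V2 al \<beta> g s k b) t"
  by (rule rc_cont[OF icum_cont[OF spw, of "t + 1"] t]) (use t in auto)

lemma Mproc_rc:
  assumes t: "0 \<le> t"
  shows "rc (Mproc V1 V2 al \<beta> g s Np k) t"
proof (rule rc_cong)
  show "rc (\<lambda>x. Np k True (icum V1 V2 al \<beta> g s k False x) - Np k False (icum V1 V2 al \<beta> g s k True x)
      + (icum V1 V2 al \<beta> g s k True x - icum V1 V2 al \<beta> g s k False x)) t"
  proof (rule rc_combine)
    show "rc (\<lambda>x. Np k True (icum V1 V2 al \<beta> g s k False x)) t"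
      by (rule rc_comp_pw[OF Npw icum_rc[OF t]]) (use icum_mono[OF spw t] icum_bounds(1)[OF spw t] in auto)
    show "rc (\<lambda>x. Np k False (icum V1 V2 al \<beta> g s k True x)) t"
      by (rule rc_comp_pw[OF Npw icum_rc[OF t]]) (use icum_mono[OF spw t] icum_bounds(1)[OF spw t] in auto)
  qed (rule icum_rc[OF t])+
  fix x assume "t \<le> x"
  hence x: "0 \<le> x" using t by simp
  show "Np k True (icum V1 V2 al \<beta> g s k False x) - Np k False (icum V1 V2 al \<beta> g s k True x)
      + (icum V1 V2 al \<beta> g s k True x - icum V1 V2 al \<beta> g s k False x) = Mproc V1 V2 al \<beta> g s Np k x"
    unfolding Mproc_eq int_Ispath[OF spw x sval] by simp
qed

end

lemma rc_lin:
  assumes "rc f t"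
  shows "rc (\<lambda>s. a * f s / b) t"
  unfolding rc_def
proof (intro allI impI)
  fix e :: real assume e: "0 < e"
  have e': "0 < e / (\<bar>a / b\<bar> + 1)" using e by (simp add: add_nonneg_pos)
  obtain d where d: "d > 0" "\<forall>s. t < s \<and> s < t + d \<longrightarrow> \<bar>f s - f t\<bar> < e / (\<bar>a / b\<bar> + 1)"
    using assms e' unfolding rc_def by blast
  show "\<exists>d>0. \<forall>s. t < s \<and> s < t + d \<longrightarrow> \<bar>a * f s / b - a * f t / b\<bar> < e"
  proof (intro exI[of _ d] conjI allI impI)
    fix s assume s: "t < s \<and> s < t + d"
    have a: "\<bar>f s - f t\<bar> < e / (\<bar>a / b\<bar> + 1)" using d(2) s by blast
    have "a * f s / b - a * f t / b = (a / b) * (f s - f t)" by (simp add: algebra_simps)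
    hence "\<bar>a * f s / b - a * f t / b\<bar> = \<bar>a / b\<bar> * \<bar>f s - f t\<bar>" by (simp add: abs_mult)
    also have "\<dots> \<le> \<bar>a / b\<bar> * (e / (\<bar>a / b\<bar> + 1))" using a by (intro mult_left_mono) auto
    also have "\<dots> < e" using e by (simp add: field_simps)
    finally show "\<bar>a * f s / b - a * f t / b\<bar> < e" .
  qed (rule d(1))
qed


lemma rfun_meas[measurable]: "rfun \<beta> \<in> borel_measurable borel"
proof (cases "\<beta> = \<infinity>")
  case True
  have "rfun \<beta> = (\<lambda>x::real. if x < 0 then 1 else if x = 0 then 1/2 else 0)"
    using True by (simp add: rfun_def fun_eq_iff)
  moreover have "(\<lambda>x::real. if x < 0 then 1 else if x = 0 then 1/2 else (0::real)) \<in> borel_measurable borel"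
    by measurable
  ultimately show ?thesis by simp
next
  case False
  have "rfun \<beta> = (\<lambda>x::real. 1 / (1 + exp (real_of_ereal \<beta> * x)))"
    using False by (simp add: rfun_def fun_eq_iff)
  moreover have "(\<lambda>x::real. 1 / (1 + exp (real_of_ereal \<beta> * x))) \<in> borel_measurable borel"
    by measurable
  ultimately show ?thesis by simp
qed

context
  fixes M :: "'a measure" and V1 V2 :: nat and al :: real and \<beta> :: ereal
    and G :: "'a \<Rightarrow> nat \<Rightarrow> nat \<Rightarrow> bool" and \<sigma> :: "'a \<Rightarrow> real \<Rightarrow> nat \<Rightarrow> real"
  assumes Gm[measurable]: "\<And>u v. (\<lambda>\<omega>. G \<omega> u v) \<in> measurable M (count_space UNIV)"
    and \<sigma>m[measurable]: "\<And>t u. (\<lambda>\<omega>. \<sigma> \<omega> t u) \<in> borel_measurable M"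
    and \<sigma>pw: "\<And>\<omega>. \<omega> \<in> space M \<Longrightarrow> pw_const_cadlag (\<sigma> \<omega>)"
    and \<sigma>val: "\<And>\<omega>. \<omega> \<in> space M \<Longrightarrow> \<forall>t\<ge>0. \<forall>u\<in>nodes V1 V2. \<sigma> \<omega> t u = 1 \<or> \<sigma> \<omega> t u = -1"
begin

lemma Delta_meas[measurable]: "(\<lambda>\<omega>. Delta V1 V2 (G \<omega>) al (\<sigma> \<omega> \<tau>) u) \<in> borel_measurable M"
  unfolding Delta_def by measurable

lemma Ipath_meas: "(\<lambda>\<omega>. Ipath V1 V2 al \<beta> (G \<omega>) (\<sigma> \<omega>) k sg \<tau>) \<in> borel_measurable M"
  unfolding Ipath_def frate_def by measurable

lemma Ispath_meas: "(\<lambda>\<omega>. Ispath V1 V2 al \<beta> (G \<omega>) (\<sigma> \<omega>) k \<tau>) \<in> borel_measurable M"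
  unfolding Ispath_def frate_def by measurable

lemma icum_meas:
  assumes t: "0 \<le> t"
  shows "(\<lambda>\<omega>. icum V1 V2 al \<beta> (G \<omega>) (\<sigma> \<omega>) k sg t) \<in> borel_measurable M"
  unfolding icum_Ipath
proof (rule param_integral_meas[where B = "real (csize V1 V2 k)"])
  show "(\<lambda>\<omega>. Ipath V1 V2 al \<beta> (G \<omega>) (\<sigma> \<omega>) k sg \<tau>) \<in> borel_measurable M" for \<tau> by (rule Ipath_meas)
  show "pw_const_cadlag (Ipath V1 V2 al \<beta> (G \<omega>) (\<sigma> \<omega>) k sg)" if "\<omega> \<in> space M" for \<omega>
    by (rule Ipath_pw[OF \<sigma>pw[OF that]])
  show "\<bar>Ipath V1 V2 al \<beta> (G \<omega>) (\<sigma> \<omega>) k sg \<tau>\<bar> \<le> real (csize V1 V2 k)" for \<omega> \<tau>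
    using Ipath_bounds[of V1 V2 al \<beta> "G \<omega>" "\<sigma> \<omega>" k sg \<tau>] by simp
qed (rule t)

lemma intIs_meas:
  assumes t: "0 \<le> t"
  shows "(\<lambda>\<omega>. integral {0..t} (Ispath V1 V2 al \<beta> (G \<omega>) (\<sigma> \<omega>) k)) \<in> borel_measurable M"
proof (rule param_integral_meas[where B = "real (csize V1 V2 k)"])
  show "(\<lambda>\<omega>. Ispath V1 V2 al \<beta> (G \<omega>) (\<sigma> \<omega>) k \<tau>) \<in> borel_measurable M" for \<tau> by (rule Ispath_meas)
  show "pw_const_cadlag (Ispath V1 V2 al \<beta> (G \<omega>) (\<sigma> \<omega>) k)" if "\<omega> \<in> space M" for \<omega>
    by (rule Ispath_pw[OF \<sigma>pw[OF that]])
  show "\<bar>Ispath V1 V2 al \<beta> (G \<omega>) (\<sigma> \<omega>) k \<tau>\<bar> \<le> real (csize V1 V2 k)" if "\<omega> \<in> space M" "0 \<le> \<tau>" for \<omega> \<tau>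
    using \<sigma>val[OF that(1)] that(2) by (intro Ispath_abs) auto
qed (rule t)

end


locale gs =
  fixes M :: "'a measure" and V1 V2 :: nat and al :: real and \<beta> :: ereal
    and G :: "'a \<Rightarrow> nat \<Rightarrow> nat \<Rightarrow> bool" and \<sigma> :: "'a \<Rightarrow> real \<Rightarrow> nat \<Rightarrow> real"
    and N :: "nat \<times> bool \<Rightarrow> 'a \<Rightarrow> real \<Rightarrow> real" and k :: nat
  assumes Gm: "\<And>u v. (\<lambda>\<omega>. G \<omega> u v) \<in> measurable M (count_space UNIV)"
    and \<sigma>m: "\<And>t u. (\<lambda>\<omega>. \<sigma> \<omega> t u) \<in> borel_measurable M"
    and \<sigma>pw: "\<And>\<omega>. \<omega> \<in> space M \<Longrightarrow> pw_const_cadlag (\<sigma> \<omega>)"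
    and \<sigma>val: "\<And>\<omega>. \<omega> \<in> space M \<Longrightarrow> \<forall>t\<ge>0. \<forall>u\<in>nodes V1 V2. \<sigma> \<omega> t u = 1 \<or> \<sigma> \<omega> t u = -1"
    and NP: "indep_unit_poisson M ({1, 2} \<times> UNIV) N"
    and k: "k \<in> {1, 2}"
begin

lemmas gs_meas[measurable] = Gm \<sigma>m


lemma N_props:
  shows "\<And>t. (\<lambda>\<omega>. N (k, b) \<omega> t) \<in> borel_measurable M"
    and "\<And>\<omega>. \<omega> \<in> space M \<Longrightarrow> N (k, b) \<omega> 0 = 0"
    and "\<And>\<omega>. \<omega> \<in> space M \<Longrightarrow> mono_on {0..} (N (k, b) \<omega>)"
    and "\<And>\<omega>. \<omega> \<in> space M \<Longrightarrow> pw_const_cadlag (N (k, b) \<omega>)"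
    and "\<And>\<omega> x. \<omega> \<in> space M \<Longrightarrow> 0 \<le> x \<Longrightarrow> 0 \<le> N (k, b) \<omega> x"
proof -
  have kb: "(k, b) \<in> {1, 2} \<times> (UNIV :: bool set)" using k by simp
  note d = NP[unfolded indep_unit_poisson_def]
  show "\<And>t. (\<lambda>\<omega>. N (k, b) \<omega> t) \<in> borel_measurable M" using d kb by blast
  show "\<And>\<omega>. \<omega> \<in> space M \<Longrightarrow> N (k, b) \<omega> 0 = 0" using d kb by blast
  show "\<And>\<omega>. \<omega> \<in> space M \<Longrightarrow> mono_on {0..} (N (k, b) \<omega>)" using d kb by blast
  show "\<And>\<omega>. \<omega> \<in> space M \<Longrightarrow> pw_const_cadlag (N (k, b) \<omega>)" using d kb by blast
  fix \<omega> and x :: real assume w: "\<omega> \<in> space M" and x: "0 \<le> x"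
  have "N (k, b) \<omega> x \<in> \<nat>" using d kb w x by blast
  thus "0 \<le> N (k, b) \<omega> x" by (rule Nats_cases) simp
qed

lemma Ncomp_meas:
  assumes t: "0 \<le> t"
  shows "(\<lambda>\<omega>. N (k, b) \<omega> (icum V1 V2 al \<beta> (G \<omega>) (\<sigma> \<omega>) k sg t)) \<in> borel_measurable M"
proof -
  have jm: "(\<lambda>x. N (k, b) (fst x) (max 0 (snd x))) \<in> borel_measurable (M \<Otimes>\<^sub>M lborel)"
    by (rule pw_joint_meas[OF N_props(1) N_props(4)])
  have im: "(\<lambda>\<omega>. icum V1 V2 al \<beta> (G \<omega>) (\<sigma> \<omega>) k sg t) \<in> borel_measurable M"
    by (rule icum_meas[OF Gm \<sigma>m \<sigma>pw \<sigma>val t])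
  have pm: "(\<lambda>\<omega>. (\<omega>, icum V1 V2 al \<beta> (G \<omega>) (\<sigma> \<omega>) k sg t)) \<in> measurable M (M \<Otimes>\<^sub>M lborel)"
    using im by (intro measurable_Pair) simp_all
  have "(\<lambda>\<omega>. N (k, b) \<omega> (max 0 (icum V1 V2 al \<beta> (G \<omega>) (\<sigma> \<omega>) k sg t))) \<in> borel_measurable M"
    using measurable_compose[OF pm jm] by simp
  moreover have "max 0 (icum V1 V2 al \<beta> (G \<omega>) (\<sigma> \<omega>) k sg t) = icum V1 V2 al \<beta> (G \<omega>) (\<sigma> \<omega>) k sg t"
    if "\<omega> \<in> space M" for \<omega>
    using icum_bounds(1)[OF \<sigma>pw[OF that] t] by simp
  ultimately show ?thesis by (subst (asm) measurable_cong) auto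
qed

lemma Mproc_meas:
  assumes t: "0 \<le> t"
  shows "(\<lambda>\<omega>. Mproc V1 V2 al \<beta> (G \<omega>) (\<sigma> \<omega>) (\<lambda>k' sg. N (k', sg) \<omega>) k t) \<in> borel_measurable M"
  unfolding Mproc_eq
  by (intro borel_measurable_add borel_measurable_diff Ncomp_meas intIs_meas[OF Gm \<sigma>m \<sigma>pw \<sigma>val] t)

lemma path_facts:
  assumes w: "\<omega> \<in> space M"
  shows "pw_const_cadlag (\<sigma> \<omega>)" "\<forall>\<tau>\<ge>0. \<forall>u\<in>nodes V1 V2. \<sigma> \<omega> \<tau> u = 1 \<or> \<sigma> \<omega> \<tau> u = -1"
    "\<And>b. mono_on {0..} ((\<lambda>k' sg. N (k', sg) \<omega>) k b)"
    "\<And>b x. 0 \<le> x \<Longrightarrow> 0 \<le> (\<lambda>k' sg. N (k', sg) \<omega>) k b x"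
    "\<And>b. pw_const_cadlag ((\<lambda>k' sg. N (k', sg) \<omega>) k b)"
  using \<sigma>pw[OF w] \<sigma>val[OF w] N_props(3,4,5)[OF w] by auto

lemma Mproc_bdd_w:
  assumes w: "\<omega> \<in> space M" and t: "0 \<le> t" "t \<le> T"
  shows "\<bar>Mproc V1 V2 al \<beta> (G \<omega>) (\<sigma> \<omega>) (\<lambda>k' sg. N (k', sg) \<omega>) k t\<bar> \<le>
     N (k, True) \<omega> (real (csize V1 V2 k) * T) + N (k, False) \<omega> (real (csize V1 V2 k) * T) + 2 * (real (csize V1 V2 k) * T)"
  using Mproc_bdd[where Np = "\<lambda>k' sg. N (k', sg) \<omega>" and s = "\<sigma> \<omega>", OF path_facts[OF w] t] by simp

lemma Mproc_rc_w:
  assumes w: "\<omega> \<in> space M" and t: "0 \<le> t"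
  shows "rc (Mproc V1 V2 al \<beta> (G \<omega>) (\<sigma> \<omega>) (\<lambda>k' sg. N (k', sg) \<omega>) k) t"
  by (rule Mproc_rc[where Np = "\<lambda>k' sg. N (k', sg) \<omega>" and s = "\<sigma> \<omega>", OF path_facts[OF w] t])

lemma Mproc_bound_w:
  assumes w: "\<omega> \<in> space M" and h: "0 < h" and mh: "real m * h = real (csize V1 V2 k) * T"
    and t: "0 \<le> t" "t \<le> T"
    and good: "\<And>b. \<forall>j\<le>m. \<bar>N (k, b) \<omega> (real j * h) - real j * h\<bar> < B"
  shows "\<bar>Mproc V1 V2 al \<beta> (G \<omega>) (\<sigma> \<omega>) (\<lambda>k' sg. N (k', sg) \<omega>) k t\<bar> \<le> 2 * (B + h)"
proof -
  note pf = path_facts[OF w]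
  show ?thesis
    by (rule Mproc_bound[where Np = "\<lambda>k' sg. N (k', sg) \<omega>" and s = "\<sigma> \<omega>"])
       (use pf h mh t good in simp_all)
qed

end

lemma countable_D: "countable (({0..T} \<inter> \<rat>) \<union> {T::real})"
  using countable_rat by (intro countable_Un countable_Int2) auto


context gs
begin

definition Mp where "Mp \<omega> t = Mproc V1 V2 al \<beta> (G \<omega>) (\<sigma> \<omega>) (\<lambda>k' sg. N (k', sg) \<omega>) k t"
definition Bdd where "Bdd T \<omega> = N (k, True) \<omega> (real (csize V1 V2 k) * T) + N (k, False) \<omega> (real (csize V1 V2 k) * T) + 2 * (real (csize V1 V2 k) * T)"

lemma Mp_bdd: "\<omega> \<in> space M \<Longrightarrow> 0 \<le> t \<Longrightarrow> t \<le> T \<Longrightarrow> \<bar>Mp \<omega> t\<bar> \<le> Bdd T \<omega>"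
  unfolding Mp_def Bdd_def by (rule Mproc_bdd_w)

lemma Mp_rc: "\<omega> \<in> space M \<Longrightarrow> 0 \<le> t \<Longrightarrow> rc (Mp \<omega>) t"
  unfolding Mp_def[abs_def] by (rule Mproc_rc_w)

lemma Mp_meas: "0 \<le> t \<Longrightarrow> (\<lambda>\<omega>. Mp \<omega> t) \<in> borel_measurable M"
  unfolding Mp_def by (rule Mproc_meas)

lemma X_meas:
  assumes T: "0 \<le> T" and c: "0 \<le> c"
  shows "(\<lambda>\<omega>. SUP t\<in>{0..T}. c * \<bar>Mp \<omega> t\<bar>) \<in> borel_measurable M"
proof -
  let ?D = "({0..T} \<inter> \<rat>) \<union> {T}"
  have eq: "(SUP t\<in>{0..T}. c * \<bar>Mp \<omega> t\<bar>) = (SUP t\<in>?D. c * \<bar>Mp \<omega> t\<bar>)" if w: "\<omega> \<in> space M" for \<omega>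
  proof (rule sup_countable_eq[OF T])
    show "\<bar>c * \<bar>Mp \<omega> t\<bar>\<bar> \<le> c * Bdd T \<omega>" if "t \<in> {0..T}" for t
      using Mp_bdd[OF w, of t T] that c by (simp add: abs_mult mult_left_mono)
    show "rc (\<lambda>t. c * \<bar>Mp \<omega> t\<bar>) t" if "0 \<le> t" "t < T" for t
      by (rule rc_scale_abs[OF Mp_rc[OF w that(1)] c])
  qed
  have "(\<lambda>\<omega>. SUP t\<in>?D. c * \<bar>Mp \<omega> t\<bar>) \<in> borel_measurable M"
  proof (rule borel_measurable_cSUP[OF countable_D])
    fix t assume "t \<in> ?D"
    hence "0 \<le> t" using T by auto
    thus "(\<lambda>\<omega>. c * \<bar>Mp \<omega> t\<bar>) \<in> borel_measurable M" using Mp_meas by measurable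
  next
    fix \<omega> assume w: "\<omega> \<in> space M"
    show "bdd_above ((\<lambda>t. c * \<bar>Mp \<omega> t\<bar>) ` ?D)"
    proof (rule bdd_aboveI[of _ "c * Bdd T \<omega>"])
      fix x assume "x \<in> (\<lambda>t. c * \<bar>Mp \<omega> t\<bar>) ` ?D"
      then obtain t where t: "t \<in> ?D" "x = c * \<bar>Mp \<omega> t\<bar>" by blast
      have "0 \<le> t" "t \<le> T" using t T by auto
      thus "x \<le> c * Bdd T \<omega>" using Mp_bdd[OF w] t(2) c by (simp add: mult_left_mono)
    qed
  qed
  thus ?thesis by (subst measurable_cong[OF eq]) auto
qed

end

lemma Y_meas:
  assumes g1: "gs M V1 V2 G \<sigma> N 1" and g2: "gs M V1 V2 G \<sigma> N 2" and T: "0 \<le> T"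
  shows "(\<lambda>\<omega>. SUP t\<in>{0..T}. norm (c * gs.Mp V1 V2 al \<beta> G \<sigma> N 1 \<omega> t / a1, c * gs.Mp V1 V2 al \<beta> G \<sigma> N 2 \<omega> t / a2))
           \<in> borel_measurable M"
proof -
  let ?D = "({0..T} \<inter> \<rat>) \<union> {T}"
  let ?M1 = "gs.Mp V1 V2 al \<beta> G \<sigma> N 1" and ?M2 = "gs.Mp V1 V2 al \<beta> G \<sigma> N 2"
  let ?B = "\<lambda>\<omega>. \<bar>c / a1\<bar> * gs.Bdd V1 V2 N 1 T \<omega> + \<bar>c / a2\<bar> * gs.Bdd V1 V2 N 2 T \<omega>"
  have bnd: "\<bar>norm (c * ?M1 \<omega> t / a1, c * ?M2 \<omega> t / a2)\<bar> \<le> ?B \<omega>" if w: "\<omega> \<in> space M" "0 \<le> t" "t \<le> T" for \<omega> t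
  proof -
    have "norm (c * ?M1 \<omega> t / a1, c * ?M2 \<omega> t / a2) \<le> norm (c * ?M1 \<omega> t / a1) + norm (c * ?M2 \<omega> t / a2)"
      by (rule norm_Pair_le)
    also have "norm (c * ?M1 \<omega> t / a1) = \<bar>c / a1\<bar> * \<bar>?M1 \<omega> t\<bar>" by (simp add: abs_mult)
    also have "norm (c * ?M2 \<omega> t / a2) = \<bar>c / a2\<bar> * \<bar>?M2 \<omega> t\<bar>" by (simp add: abs_mult)
    also have "\<bar>c / a1\<bar> * \<bar>?M1 \<omega> t\<bar> + \<bar>c / a2\<bar> * \<bar>?M2 \<omega> t\<bar> \<le> ?B \<omega>"
      using gs.Mp_bdd[OF g1 w] gs.Mp_bdd[OF g2 w] by (intro add_mono mult_left_mono) auto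
    finally show ?thesis by simp
  qed
  have eq: "(SUP t\<in>{0..T}. norm (c * ?M1 \<omega> t / a1, c * ?M2 \<omega> t / a2)) = (SUP t\<in>?D. norm (c * ?M1 \<omega> t / a1, c * ?M2 \<omega> t / a2))"
    if w: "\<omega> \<in> space M" for \<omega>
  proof (rule sup_countable_eq[OF T])
    show "\<bar>norm (c * ?M1 \<omega> t / a1, c * ?M2 \<omega> t / a2)\<bar> \<le> ?B \<omega>" if "t \<in> {0..T}" for t
      using bnd[OF w, of t] that by auto
    show "rc (\<lambda>t. norm (c * ?M1 \<omega> t / a1, c * ?M2 \<omega> t / a2)) t" if "0 \<le> t" "t < T" for t
      by (rule rc_norm_pair[OF rc_lin[OF gs.Mp_rc[OF g1 w that(1)]] rc_lin[OF gs.Mp_rc[OF g2 w that(1)]]])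
  qed
  have "(\<lambda>\<omega>. SUP t\<in>?D. norm (c * ?M1 \<omega> t / a1, c * ?M2 \<omega> t / a2)) \<in> borel_measurable M"
  proof (rule borel_measurable_cSUP[OF countable_D])
    fix t assume "t \<in> ?D"
    hence t: "0 \<le> t" using T by auto
    have m1: "(\<lambda>\<omega>. ?M1 \<omega> t) \<in> borel_measurable M" by (rule gs.Mp_meas[OF g1 t])
    have m2: "(\<lambda>\<omega>. ?M2 \<omega> t) \<in> borel_measurable M" by (rule gs.Mp_meas[OF g2 t])
    show "(\<lambda>\<omega>. norm (c * ?M1 \<omega> t / a1, c * ?M2 \<omega> t / a2)) \<in> borel_measurable M"
      using m1 m2 by measurable
  next
    fix \<omega> assume w: "\<omega> \<in> space M"
    show "bdd_above ((\<lambda>t. norm (c * ?M1 \<omega> t / a1, c * ?M2 \<omega> t / a2)) ` ?D)"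
    proof (rule bdd_aboveI[of _ "?B \<omega>"])
      fix x assume "x \<in> (\<lambda>t. norm (c * ?M1 \<omega> t / a1, c * ?M2 \<omega> t / a2)) ` ?D"
      then obtain t where t: "t \<in> ?D" "x = norm (c * ?M1 \<omega> t / a1, c * ?M2 \<omega> t / a2)" by blast
      have "0 \<le> t" "t \<le> T" using t T by auto
      thus "x \<le> ?B \<omega>" using bnd[OF w] t(2) by force
    qed
  qed
  thus ?thesis by (subst measurable_cong[OF eq]) auto
qed


context gs
begin

lemma bad_event:
  assumes P: "prob_space M" and V: "0 < real (csize V1 V2 k)" and T: "0 < T" and a0: "0 < a0"
    and small: "64 * (real (csize V1 V2 k) * T) / a0\<^sup>2 \<le> 1/2"
  shows "\<exists>Bad\<in>sets M. measure M Bad \<le> 256 * (real (csize V1 V2 k) * T) / a0\<^sup>2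
           \<and> (\<forall>\<omega>\<in>space M - Bad. \<forall>t\<in>{0..T}. \<bar>Mp \<omega> t\<bar> \<le> a0)"
proof -
  interpret prob_space M by (rule P)
  define L where "L = real (csize V1 V2 k) * T"
  have L: "0 < L" using V T by (simp add: L_def)
  define m where "m = nat \<lceil>4 * L / a0\<rceil>"
  have m4: "4 * L / a0 \<le> real m" unfolding m_def by linarith
  have z: "0 < \<lceil>4 * L / a0\<rceil>" using L a0 by simp
  have m1: "1 \<le> m" unfolding m_def using z by (simp add: le_nat_iff)
  define h where "h = L / real m"
  have h: "0 < h" using L m1 by (simp add: h_def)
  have mh: "real m * h = L" using m1 by (simp add: h_def)
  have h4: "h \<le> a0 / 4"
  proof -
    have "4 * L \<le> real m * a0" using m4 a0 by (simp add: divide_le_eq mult.commute)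
    thus ?thesis using m1 by (simp add: h_def divide_le_eq field_simps)
  qed
  define A where "A = a0 / 8"
  have A: "0 < A" using a0 by (simp add: A_def)
  have mhA: "real m * h / A\<^sup>2 = 64 * L / a0\<^sup>2"
    unfolding mh A_def by (simp add: power2_eq_square field_simps)
  define Bad where "Bad b = {\<omega>\<in>space M. \<exists>j\<le>m. 2*A \<le> \<bar>N (k, b) \<omega> (real j * h) - real j * h\<bar>}" for b
  have Nm[measurable]: "\<And>b t. (\<lambda>\<omega>. N (k, b) \<omega> t) \<in> borel_measurable M" by (rule N_props(1))
  have Bm: "Bad b \<in> sets M" for b unfolding Bad_def by measurable
  have pB: "measure M (Bad b) \<le> 2 * (64 * L / a0\<^sup>2)" for b
  proof -
    have "measure M (Bad b) \<le> 2 * (real m * h / A\<^sup>2)"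
      unfolding Bad_def
      by (rule maximal_ineq[OF P _ NP _ h A m1]) (use k mhA small in \<open>auto simp: L_def\<close>)
    thus ?thesis using mhA by simp
  qed
  show ?thesis
  proof (intro bexI[of _ "Bad True \<union> Bad False"] conjI)
    show "Bad True \<union> Bad False \<in> sets M" using Bm by auto
    have "measure M (Bad True \<union> Bad False) \<le> measure M (Bad True) + measure M (Bad False)"
      by (rule measure_subadditive) (use Bm in auto)
    thus "measure M (Bad True \<union> Bad False) \<le> 256 * (real (csize V1 V2 k) * T) / a0\<^sup>2"
    proof -
      have eq: "256 * (real (csize V1 V2 k) * T) / a0\<^sup>2 = 2 * (64 * L / a0\<^sup>2) + 2 * (64 * L / a0\<^sup>2)"
        by (simp add: L_def field_simps)
      note \<open>measure M (Bad True \<union> Bad False) \<le> measure M (Bad True) + measure M (Bad False)\<close>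
      also have "measure M (Bad True) + measure M (Bad False) \<le> 2 * (64 * L / a0\<^sup>2) + 2 * (64 * L / a0\<^sup>2)"
        by (rule add_mono[OF pB pB])
      also note eq[symmetric]
      finally show ?thesis .
    qed
    show "\<forall>\<omega>\<in>space M - (Bad True \<union> Bad False). \<forall>t\<in>{0..T}. \<bar>Mp \<omega> t\<bar> \<le> a0"
    proof (intro ballI)
      fix \<omega> t assume w: "\<omega> \<in> space M - (Bad True \<union> Bad False)" and t: "t \<in> {0..T}"
      have good: "\<forall>j\<le>m. \<bar>N (k, b) \<omega> (real j * h) - real j * h\<bar> < 2*A" for b
      proof (intro allI impI)
        fix j assume j: "j \<le> m"
        have "\<omega> \<notin> Bad b" using w by (cases b) auto
        hence "\<not> (\<exists>j\<le>m. 2*A \<le> \<bar>N (k, b) \<omega> (real j * h) - real j * h\<bar>)" using w by (simp add: Bad_def)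
        thus "\<bar>N (k, b) \<omega> (real j * h) - real j * h\<bar> < 2*A" using j by (meson not_le)
      qed
      have "\<bar>Mp \<omega> t\<bar> \<le> 2 * (2*A + h)"
        unfolding Mp_def by (rule Mproc_bound_w[where m = m]) (use w h mh t good in \<open>auto simp: L_def\<close>)
      also have "\<dots> \<le> a0" using h4 by (simp add: A_def)
      finally show "\<bar>Mp \<omega> t\<bar> \<le> a0" .
    qed
  qed
qed

end


lemma cdf_return0: "cdf (return borel (0::real)) x = (if 0 \<le> x then 1 else 0)"
  by (simp add: cdf_def2 measure_return indicator_def)

lemma not_isCont_step: "\<not> isCont (\<lambda>x::real. if 0 \<le> x then 1 else (0::real)) 0"
proof
  assume c: "isCont (\<lambda>x::real. if 0 \<le> x then 1 else (0::real)) 0"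
  have s: "(\<lambda>n. - inverse (real (Suc n))) \<longlonglongrightarrow> 0"
    using tendsto_minus[OF LIMSEQ_inverse_real_of_nat] by simp
  have "(\<lambda>n. (\<lambda>x::real. if 0 \<le> x then 1 else (0::real)) (- inverse (real (Suc n)))) \<longlonglongrightarrow> 1"
    using isCont_tendsto_compose[OF c s] by simp
  moreover have "(\<lambda>n. (\<lambda>x::real. if 0 \<le> x then 1 else (0::real)) (- inverse (real (Suc n)))) = (\<lambda>n. 0)"
    by (rule ext) simp
  ultimately have "(\<lambda>n. 0::real) \<longlonglongrightarrow> 1" by simp
  thus False using LIMSEQ_unique[OF tendsto_const] by fastforce
qed

lemma conv_zero:
  fixes P :: "nat \<Rightarrow> 'a measure" and X :: "nat \<Rightarrow> 'a \<Rightarrow> real"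
  assumes prob: "\<And>n. prob_space (P n)"
    and Xm: "\<And>n. X n \<in> borel_measurable (P n)"
    and Xnn: "\<And>n \<omega>. \<omega> \<in> space (P n) \<Longrightarrow> 0 \<le> X n \<omega>"
    and small: "\<And>\<delta>. 0 < \<delta> \<Longrightarrow> \<exists>b. b \<longlonglongrightarrow> 0 \<and> (\<forall>\<^sub>F n in sequentially. \<exists>Bad\<in>sets (P n).
                    measure (P n) Bad \<le> b n \<and> (\<forall>\<omega>\<in>space (P n) - Bad. X n \<omega> \<le> \<delta>))"
  shows "weak_conv_m (\<lambda>n. distr (P n) borel (X n)) (return borel 0)"
  unfolding weak_conv_m_def weak_conv_def
proof (intro allI impI)
  fix x :: real
  assume ic: "isCont (cdf (return borel 0)) x"
  have cdfn: "cdf (distr (P n) borel (X n)) x = measure (P n) {\<omega>\<in>space (P n). X n \<omega> \<le> x}" for n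
    unfolding cdf_def2 by (subst measure_distr[OF Xm]) (auto simp: vimage_def Int_def conj_commute)
  show "(\<lambda>n. cdf (distr (P n) borel (X n)) x) \<longlonglongrightarrow> cdf (return borel 0) x"
  proof (cases "x < 0")
    case True
    have e: "{\<omega>\<in>space (P n). X n \<omega> \<le> x} = {}" for n using Xnn True by force
    have "cdf (distr (P n) borel (X n)) x = 0" for n unfolding cdfn e by simp
    thus ?thesis using True by (simp add: cdf_return0)
  next
    case False
    have x0: "x \<noteq> 0"
    proof
      assume "x = 0"
      hence "isCont (\<lambda>x::real. if 0 \<le> x then 1 else (0::real)) 0"
        using ic by (simp add: cdf_return0[abs_def])
      thus False using not_isCont_step by blast
    qed
    hence xp: "0 < x" using False by simp
    obtain b where b: "b \<longlonglongrightarrow> 0" and ev: "\<forall>\<^sub>F n in sequentially. \<exists>Bad\<in>sets (P n).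
                    measure (P n) Bad \<le> b n \<and> (\<forall>\<omega>\<in>space (P n) - Bad. X n \<omega> \<le> x)"
      using small[OF xp] by blast
    have lower: "\<forall>\<^sub>F n in sequentially. 1 - b n \<le> cdf (distr (P n) borel (X n)) x"
      using ev
    proof eventually_elim
      case (elim n)
      then obtain Bad where Bad: "Bad \<in> sets (P n)" "measure (P n) Bad \<le> b n"
        "\<forall>\<omega>\<in>space (P n) - Bad. X n \<omega> \<le> x" by blast
      interpret prob_space "P n" by (rule prob)
      have sub: "space (P n) - Bad \<subseteq> {\<omega>\<in>space (P n). X n \<omega> \<le> x}" using Bad(3) by blast
      have "{\<omega>\<in>space (P n). X n \<omega> \<le> x} \<in> sets (P n)" using Xm[of n] by measurable
      hence "measure (P n) (space (P n) - Bad) \<le> measure (P n) {\<omega>\<in>space (P n). X n \<omega> \<le> x}"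
        using sub by (intro finite_measure_mono) auto
      moreover have "measure (P n) (space (P n) - Bad) = 1 - measure (P n) Bad"
        by (rule prob_compl[OF Bad(1)])
      ultimately show ?case unfolding cdfn using Bad(2) by linarith
    qed
    have upper: "\<forall>\<^sub>F n in sequentially. cdf (distr (P n) borel (X n)) x \<le> 1"
    proof (intro always_eventually allI)
      fix n
      interpret prob_space "P n" by (rule prob)
      show "cdf (distr (P n) borel (X n)) x \<le> 1" unfolding cdfn by (rule prob_le_1)
    qed
    have "(\<lambda>n. 1 - b n) \<longlonglongrightarrow> 1" using tendsto_diff[OF tendsto_const b] by simp
    hence "(\<lambda>n. cdf (distr (P n) borel (X n)) x) \<longlonglongrightarrow> 1"
      by (rule tendsto_sandwich[OF lower upper _ tendsto_const])
    thus ?thesis using xp by (simp add: cdf_return0)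
  qed
qed

lemma gs_inst:
  assumes "is_glauber_sbm M V1 V2 pin pout \<eta> al \<beta> G \<sigma>" "indep_unit_poisson M ({1, 2} \<times> UNIV) N" "k \<in> {1, 2}"
  shows "gs M V1 V2 G \<sigma> N k"
  using assms unfolding is_glauber_sbm_def gs_def by blast


lemma part_k:
  fixes P :: "nat \<Rightarrow> 'a measure" and V1 V2 :: "nat \<Rightarrow> nat" and al :: "nat \<Rightarrow> real" and \<beta> :: "nat \<Rightarrow> ereal"
    and G :: "nat \<Rightarrow> 'a \<Rightarrow> nat \<Rightarrow> nat \<Rightarrow> bool" and \<sigma> :: "nat \<Rightarrow> 'a \<Rightarrow> real \<Rightarrow> nat \<Rightarrow> real"
    and N :: "nat \<Rightarrow> nat \<times> bool \<Rightarrow> 'a \<Rightarrow> real \<Rightarrow> real" and \<gamma> T :: "nat \<Rightarrow> real"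
  assumes prob: "\<And>n. prob_space (P n)"
    and g: "\<And>n. gs (P n) (V1 n) (V2 n) (G n) (\<sigma> n) (N n) k"
    and W: "(\<lambda>n. real (csize (V1 n) (V2 n) k) / real n) \<longlonglongrightarrow> w" and w: "0 < w"
    and \<gamma>: "\<And>n. 0 < \<gamma> n" and T: "\<And>n. 0 < T n"
    and lim: "(\<lambda>n. (\<gamma> n)\<^sup>2 * T n / real n) \<longlonglongrightarrow> 0"
    and \<delta>: "0 < \<delta>"
  shows "\<exists>b. b \<longlonglongrightarrow> 0 \<and> (\<forall>\<^sub>F n in sequentially. \<exists>Bad\<in>sets (P n). measure (P n) Bad \<le> b n \<and>
          (\<forall>\<omega>\<in>space (P n) - Bad. \<forall>t\<in>{0..T n}.
             \<gamma> n / real (csize (V1 n) (V2 n) k) * \<bar>gs.Mp (V1 n) (V2 n) (al n) (\<beta> n) (G n) (\<sigma> n) (N n) k \<omega> t\<bar> \<le> \<delta>))"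
proof -
  define Wn where "Wn n = real (csize (V1 n) (V2 n) k)" for n
  define b where "b n = 256 / \<delta>\<^sup>2 * (((\<gamma> n)\<^sup>2 * T n / real n) / (Wn n / real n))" for n
  have bl: "b \<longlonglongrightarrow> 0"
  proof -
    have "b \<longlonglongrightarrow> 256 / \<delta>\<^sup>2 * (0 / w)"
      unfolding b_def[abs_def] Wn_def using w
      by (intro tendsto_mult tendsto_const tendsto_divide lim W) auto
    thus ?thesis by simp
  qed
  have ev1: "\<forall>\<^sub>F n in sequentially. 0 < Wn n / real n"
    using order_tendstoD(1)[OF W w] unfolding Wn_def by simp
  have ev2: "\<forall>\<^sub>F n in sequentially. b n < 2"
    using order_tendstoD(2)[OF bl, of 2] by simp
  have ev3: "\<forall>\<^sub>F n in sequentially. 0 < n" by (rule eventually_gt_at_top)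
  have evf: "\<forall>\<^sub>F n in sequentially. \<exists>Bad\<in>sets (P n). measure (P n) Bad \<le> b n \<and>
          (\<forall>\<omega>\<in>space (P n) - Bad. \<forall>t\<in>{0..T n}.
             \<gamma> n / real (csize (V1 n) (V2 n) k) * \<bar>gs.Mp (V1 n) (V2 n) (al n) (\<beta> n) (G n) (\<sigma> n) (N n) k \<omega> t\<bar> \<le> \<delta>)"
    using ev1 ev2 ev3
  proof eventually_elim
    case (elim n)
    have n: "0 < real n" using elim(3) by simp
    have V: "0 < Wn n" using elim(1) n by (simp add: zero_less_divide_iff)
    define a0 where "a0 = \<delta> * Wn n / \<gamma> n"
    have a0: "0 < a0" using \<delta> V \<gamma>[of n] by (simp add: a0_def)
    have beq: "b n = 256 * (Wn n * T n) / a0\<^sup>2"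
      unfolding b_def a0_def using n V \<delta> \<gamma>[of n] by (simp add: field_simps power2_eq_square)
    have sm: "64 * (Wn n * T n) / a0\<^sup>2 \<le> 1/2"
    proof -
      have "64 * (Wn n * T n) / a0\<^sup>2 = b n / 4" using beq by simp
      thus ?thesis using elim(2) by simp
    qed
    have be: "\<exists>Bad\<in>sets (P n). measure (P n) Bad \<le> 256 * (real (csize (V1 n) (V2 n) k) * T n) / a0\<^sup>2
           \<and> (\<forall>\<omega>\<in>space (P n) - Bad. \<forall>t\<in>{0..T n}. \<bar>gs.Mp (V1 n) (V2 n) (al n) (\<beta> n) (G n) (\<sigma> n) (N n) k \<omega> t\<bar> \<le> a0)"
      by (rule gs.bad_event[OF g prob]) (use V T[of n] a0 sm in \<open>simp_all add: Wn_def\<close>)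
    then obtain Bad where Bad: "Bad \<in> sets (P n)" "measure (P n) Bad \<le> 256 * (Wn n * T n) / a0\<^sup>2"
        "\<forall>\<omega>\<in>space (P n) - Bad. \<forall>t\<in>{0..T n}. \<bar>gs.Mp (V1 n) (V2 n) (al n) (\<beta> n) (G n) (\<sigma> n) (N n) k \<omega> t\<bar> \<le> a0"
      unfolding Wn_def by blast
    show ?case
    proof (intro bexI[OF _ Bad(1)] conjI ballI)
      show "measure (P n) Bad \<le> b n" using Bad(2) beq by simp
      fix \<omega> t assume w: "\<omega> \<in> space (P n) - Bad" and t: "t \<in> {0..T n}"
      have "\<gamma> n / Wn n * \<bar>gs.Mp (V1 n) (V2 n) (al n) (\<beta> n) (G n) (\<sigma> n) (N n) k \<omega> t\<bar> \<le> \<gamma> n / Wn n * a0"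
        using Bad(3) w t \<gamma>[of n] V by (intro mult_left_mono) auto
      also have "\<gamma> n / Wn n * a0 = \<delta>" using V \<gamma>[of n] by (simp add: a0_def)
      finally show "\<gamma> n / real (csize (V1 n) (V2 n) k) * \<bar>gs.Mp (V1 n) (V2 n) (al n) (\<beta> n) (G n) (\<sigma> n) (N n) k \<omega> t\<bar> \<le> \<delta>"
        by (simp add: Wn_def)
    qed
  qed
  show ?thesis using bl evf by blast
qed


lemma Y_bdd:
  assumes g1: "gs M V1 V2 G \<sigma> N 1" and g2: "gs M V1 V2 G \<sigma> N 2" and w: "\<omega> \<in> space M"
  shows "bdd_above ((\<lambda>t. norm (c * gs.Mp V1 V2 al \<beta> G \<sigma> N 1 \<omega> t / a1, c * gs.Mp V1 V2 al \<beta> G \<sigma> N 2 \<omega> t / a2)) ` {0..T})"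
proof (rule bdd_aboveI[of _ "\<bar>c / a1\<bar> * gs.Bdd V1 V2 N 1 T \<omega> + \<bar>c / a2\<bar> * gs.Bdd V1 V2 N 2 T \<omega>"])
  let ?M1 = "gs.Mp V1 V2 al \<beta> G \<sigma> N 1" and ?M2 = "gs.Mp V1 V2 al \<beta> G \<sigma> N 2"
  fix x assume "x \<in> (\<lambda>t. norm (c * ?M1 \<omega> t / a1, c * ?M2 \<omega> t / a2)) ` {0..T}"
  then obtain t where t: "0 \<le> t" "t \<le> T" "x = norm (c * ?M1 \<omega> t / a1, c * ?M2 \<omega> t / a2)" by auto
  have "norm (c * ?M1 \<omega> t / a1, c * ?M2 \<omega> t / a2) \<le> norm (c * ?M1 \<omega> t / a1) + norm (c * ?M2 \<omega> t / a2)"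
    by (rule norm_Pair_le)
  also have "norm (c * ?M1 \<omega> t / a1) = \<bar>c / a1\<bar> * \<bar>?M1 \<omega> t\<bar>" by (simp add: abs_mult)
  also have "norm (c * ?M2 \<omega> t / a2) = \<bar>c / a2\<bar> * \<bar>?M2 \<omega> t\<bar>" by (simp add: abs_mult)
  also have "\<bar>c / a1\<bar> * \<bar>?M1 \<omega> t\<bar> + \<bar>c / a2\<bar> * \<bar>?M2 \<omega> t\<bar> \<le> \<bar>c / a1\<bar> * gs.Bdd V1 V2 N 1 T \<omega> + \<bar>c / a2\<bar> * gs.Bdd V1 V2 N 2 T \<omega>"
    using gs.Mp_bdd[OF g1 w t(1,2)] gs.Mp_bdd[OF g2 w t(1,2)] by (intro add_mono mult_left_mono) auto
  finally show "x \<le> \<bar>c / a1\<bar> * gs.Bdd V1 V2 N 1 T \<omega> + \<bar>c / a2\<bar> * gs.Bdd V1 V2 N 2 T \<omega>" using t(3) by simp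
qed

lemma (in gs) Mp_unfold: "Mp \<omega> t = Mproc V1 V2 al \<beta> (G \<omega>) (\<sigma> \<omega>) (\<lambda>k' sg. N (k', sg) \<omega>) k t"
  by (simp add: Mp_def)

theorem proposition7p1:
  fixes P :: "nat \<Rightarrow> 'a measure"
    and V1 V2 :: "nat \<Rightarrow> nat" and v1 v2 :: real
    and a b :: real and lam :: "nat \<Rightarrow> real"
    and \<alpha> :: real and \<eta> :: real and \<beta> :: "nat \<Rightarrow> ereal"
    and G :: "nat \<Rightarrow> 'a \<Rightarrow> nat \<Rightarrow> nat \<Rightarrow> bool"
    and \<sigma> :: "nat \<Rightarrow> 'a \<Rightarrow> real \<Rightarrow> nat \<Rightarrow> real"
    and N :: "nat \<Rightarrow> nat \<times> bool \<Rightarrow> 'a \<Rightarrow> real \<Rightarrow> real"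
    and \<gamma> tt :: "nat \<Rightarrow> real"
  assumes prob: "\<And>n. prob_space (P n)"
    and V1lim: "(\<lambda>n. real (V1 n) / real n) \<longlonglongrightarrow> v1" and v1pos: "0 < v1"
    and V2lim: "(\<lambda>n. real (V2 n) / real n) \<longlonglongrightarrow> v2" and v2pos: "0 < v2"
    and ab: "0 < b" "b < a"
    and lam_inf: "filterlim lam at_top sequentially"
    and lam_ok: "\<And>n. 0 \<le> lam n \<and> a * lam n / real n \<le> 1"
    and eta: "0 < \<eta>" "\<eta> \<le> 1"
    and beta: "\<And>n. 0 < \<beta> n"
    and glauber: "\<And>n. is_glauber_sbm (P n) (V1 n) (V2 n) (a * lam n / real n) (b * lam n / real n)
                          \<eta> (\<alpha> * lam n / real n) (\<beta> n) (G n) (\<sigma> n)"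
    and poisson: "\<And>n. indep_unit_poisson (P n) ({1, 2} \<times> UNIV) (N n)"
    and construction: "\<And>n k. k \<in> {1, 2} \<Longrightarrow> AE \<omega> in P n. \<forall>t\<ge>0.
           zmag (V1 n) (V2 n) (\<sigma> n \<omega>) k t - zmag (V1 n) (V2 n) (\<sigma> n \<omega>) k 0
         = 2 / real (csize (V1 n) (V2 n) k)
           * (N n (k, True) \<omega> (icum (V1 n) (V2 n) (\<alpha> * lam n / real n) (\<beta> n) (G n \<omega>) (\<sigma> n \<omega>) k False t)
              - N n (k, False) \<omega> (icum (V1 n) (V2 n) (\<alpha> * lam n / real n) (\<beta> n) (G n \<omega>) (\<sigma> n \<omega>) k True t))"
    and gt_pos: "\<And>n. 0 < \<gamma> n \<and> 0 < tt n"
    and gt_lim: "(\<lambda>n. (\<gamma> n)\<^sup>2 * tt n / real n) \<longlonglongrightarrow> 0"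
  shows "(\<forall>k\<in>{1, 2}. weak_conv_m
            (\<lambda>n. distr (P n) borel (\<lambda>\<omega>. SUP t\<in>{0..tt n}.
                \<gamma> n / real (csize (V1 n) (V2 n) k)
                * \<bar>Mproc (V1 n) (V2 n) (\<alpha> * lam n / real n) (\<beta> n) (G n \<omega>) (\<sigma> n \<omega>)
                         (\<lambda>k' sg. N n (k', sg) \<omega>) k t\<bar>))
            (return borel 0))
       \<and> ((\<lambda>n. \<gamma> n / sqrt (real n)) \<longlonglongrightarrow> 0 \<longrightarrow>
          weak_conv_zero_D P (\<lambda>n \<omega> t.
            (\<gamma> n * Mproc (V1 n) (V2 n) (\<alpha> * lam n / real n) (\<beta> n) (G n \<omega>) (\<sigma> n \<omega>)
                         (\<lambda>k' sg. N n (k', sg) \<omega>) 1 t / real (V1 n),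
             \<gamma> n * Mproc (V1 n) (V2 n) (\<alpha> * lam n / real n) (\<beta> n) (G n \<omega>) (\<sigma> n \<omega>)
                         (\<lambda>k' sg. N n (k', sg) \<omega>) 2 t / real (V2 n))))"
proof -
  define al where "al n = \<alpha> * lam n / real n" for n
  have g: "\<And>n k. k \<in> {1, 2} \<Longrightarrow> gs (P n) (V1 n) (V2 n) (G n) (\<sigma> n) (N n) k"
    using gs_inst[OF glauber poisson] by blast
  have g1: "\<And>n. gs (P n) (V1 n) (V2 n) (G n) (\<sigma> n) (N n) 1" using g by simp
  have g2: "\<And>n. gs (P n) (V1 n) (V2 n) (G n) (\<sigma> n) (N n) 2" using g by simp
  have \<gamma>: "\<And>n. 0 < \<gamma> n" and ttp: "\<And>n. 0 < tt n" using gt_pos by auto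
  have W: "\<exists>w>0. (\<lambda>n. real (csize (V1 n) (V2 n) k) / real n) \<longlonglongrightarrow> w" if k: "k \<in> {1, 2}" for k
  proof (cases "k = 1")
    case True thus ?thesis using V1lim v1pos by (auto simp: csize_def)
  next
    case False thus ?thesis using V2lim v2pos by (auto simp: csize_def)
  qed
  let ?Mp = "\<lambda>n k. gs.Mp (V1 n) (V2 n) (al n) (\<beta> n) (G n) (\<sigma> n) (N n) k"
  have part1: "weak_conv_m (\<lambda>n. distr (P n) borel (\<lambda>\<omega>. SUP t\<in>{0..tt n}.
                \<gamma> n / real (csize (V1 n) (V2 n) k) * \<bar>?Mp n k \<omega> t\<bar>)) (return borel 0)"
    if k: "k \<in> {1, 2}" for k
  proof (rule conv_zero[OF prob])
    fix n
    have c: "0 \<le> \<gamma> n / real (csize (V1 n) (V2 n) k)" using \<gamma>[of n] by simp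
    show "(\<lambda>\<omega>. SUP t\<in>{0..tt n}. \<gamma> n / real (csize (V1 n) (V2 n) k) * \<bar>?Mp n k \<omega> t\<bar>) \<in> borel_measurable (P n)"
      by (rule gs.X_meas[OF g[OF k] less_imp_le[OF ttp] c])
    fix \<omega> assume w: "\<omega> \<in> space (P n)"
    show "0 \<le> (SUP t\<in>{0..tt n}. \<gamma> n / real (csize (V1 n) (V2 n) k) * \<bar>?Mp n k \<omega> t\<bar>)"
    proof (rule cSUP_upper2)
      show "bdd_above ((\<lambda>t. \<gamma> n / real (csize (V1 n) (V2 n) k) * \<bar>?Mp n k \<omega> t\<bar>) ` {0..tt n})"
      proof (rule bdd_aboveI[of _ "\<gamma> n / real (csize (V1 n) (V2 n) k) * gs.Bdd (V1 n) (V2 n) (N n) k (tt n) \<omega>"])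
        fix x assume "x \<in> (\<lambda>t. \<gamma> n / real (csize (V1 n) (V2 n) k) * \<bar>?Mp n k \<omega> t\<bar>) ` {0..tt n}"
        then obtain t where t: "0 \<le> t" "t \<le> tt n" "x = \<gamma> n / real (csize (V1 n) (V2 n) k) * \<bar>?Mp n k \<omega> t\<bar>" by auto
        show "x \<le> \<gamma> n / real (csize (V1 n) (V2 n) k) * gs.Bdd (V1 n) (V2 n) (N n) k (tt n) \<omega>"
          unfolding t(3) by (rule mult_left_mono[OF gs.Mp_bdd[OF g[OF k] w t(1,2)] c])
      qed
      show "0 \<in> {0..tt n}" using ttp[of n] by simp
      show "0 \<le> \<gamma> n / real (csize (V1 n) (V2 n) k) * \<bar>?Mp n k \<omega> 0\<bar>" by (rule mult_nonneg_nonneg[OF c abs_ge_zero])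
    qed
  next
    fix \<delta> :: real assume \<delta>: "0 < \<delta>"
    obtain w where w: "0 < w" "(\<lambda>n. real (csize (V1 n) (V2 n) k) / real n) \<longlonglongrightarrow> w" using W[OF k] by blast
    obtain bb where bb: "bb \<longlonglongrightarrow> 0" and evf: "\<forall>\<^sub>F n in sequentially. \<exists>Bad\<in>sets (P n). measure (P n) Bad \<le> bb n \<and>
          (\<forall>\<omega>\<in>space (P n) - Bad. \<forall>t\<in>{0..tt n}. \<gamma> n / real (csize (V1 n) (V2 n) k) * \<bar>?Mp n k \<omega> t\<bar> \<le> \<delta>)"
      using part_k[OF prob g[OF k] w(2) w(1) \<gamma> ttp gt_lim \<delta>, where al = al and \<beta> = \<beta>] by blast
    show "\<exists>b. b \<longlonglongrightarrow> 0 \<and> (\<forall>\<^sub>F n in sequentially. \<exists>Bad\<in>sets (P n). measure (P n) Bad \<le> b n \<and>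
            (\<forall>\<omega>\<in>space (P n) - Bad. (SUP t\<in>{0..tt n}. \<gamma> n / real (csize (V1 n) (V2 n) k) * \<bar>?Mp n k \<omega> t\<bar>) \<le> \<delta>))"
    proof (intro exI[of _ bb] conjI bb)
      show "\<forall>\<^sub>F n in sequentially. \<exists>Bad\<in>sets (P n). measure (P n) Bad \<le> bb n \<and>
            (\<forall>\<omega>\<in>space (P n) - Bad. (SUP t\<in>{0..tt n}. \<gamma> n / real (csize (V1 n) (V2 n) k) * \<bar>?Mp n k \<omega> t\<bar>) \<le> \<delta>)"
        using evf
      proof eventually_elim
        case (elim n)
        then obtain Bad where Bad: "Bad \<in> sets (P n)" "measure (P n) Bad \<le> bb n"
          "\<forall>\<omega>\<in>space (P n) - Bad. \<forall>t\<in>{0..tt n}. \<gamma> n / real (csize (V1 n) (V2 n) k) * \<bar>?Mp n k \<omega> t\<bar> \<le> \<delta>"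
          by blast
        show ?case
        proof (intro bexI[OF _ Bad(1)] conjI ballI)
          show "measure (P n) Bad \<le> bb n" by (rule Bad(2))
          fix \<omega> assume w: "\<omega> \<in> space (P n) - Bad"
          show "(SUP t\<in>{0..tt n}. \<gamma> n / real (csize (V1 n) (V2 n) k) * \<bar>?Mp n k \<omega> t\<bar>) \<le> \<delta>"
            by (rule cSUP_least) (use ttp[of n] Bad(3) w in auto)
        qed
      qed
    qed
  qed
  show ?thesis
  proof (intro conjI ballI impI)
    fix k :: nat assume k: "k \<in> {1, 2}"
    show "weak_conv_m
            (\<lambda>n. distr (P n) borel (\<lambda>\<omega>. SUP t\<in>{0..tt n}.
                \<gamma> n / real (csize (V1 n) (V2 n) k)
                * \<bar>Mproc (V1 n) (V2 n) (\<alpha> * lam n / real n) (\<beta> n) (G n \<omega>) (\<sigma> n \<omega>)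
                         (\<lambda>k' sg. N n (k', sg) \<omega>) k t\<bar>))
            (return borel 0)"
    proof -
      have eqk: "\<And>n \<omega> t. ?Mp n k \<omega> t = Mproc (V1 n) (V2 n) (\<alpha> * lam n / real n) (\<beta> n) (G n \<omega>) (\<sigma> n \<omega>) (\<lambda>k' sg. N n (k', sg) \<omega>) k t"
        using gs.Mp_unfold[OF g[OF k]] by (simp add: al_def)
      show ?thesis using part1[OF k] unfolding eqk .
    qed
  next
    assume glim: "(\<lambda>n. \<gamma> n / sqrt (real n)) \<longlonglongrightarrow> 0"
    show "weak_conv_zero_D P (\<lambda>n \<omega> t.
            (\<gamma> n * Mproc (V1 n) (V2 n) (\<alpha> * lam n / real n) (\<beta> n) (G n \<omega>) (\<sigma> n \<omega>)
                         (\<lambda>k' sg. N n (k', sg) \<omega>) 1 t / real (V1 n),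
             \<gamma> n * Mproc (V1 n) (V2 n) (\<alpha> * lam n / real n) (\<beta> n) (G n \<omega>) (\<sigma> n \<omega>)
                         (\<lambda>k' sg. N n (k', sg) \<omega>) 2 t / real (V2 n)))"
      unfolding weak_conv_zero_D_def
    proof (intro allI impI)
      fix T :: real assume T: "0 \<le> T"
      have part2: "weak_conv_m (\<lambda>n. distr (P n) borel (\<lambda>\<omega>. SUP t\<in>{0..T}.
          norm (\<gamma> n * ?Mp n 1 \<omega> t / real (V1 n), \<gamma> n * ?Mp n 2 \<omega> t / real (V2 n)))) (return borel 0)"
      proof (rule conv_zero[OF prob])
        fix n
        show "(\<lambda>\<omega>. SUP t\<in>{0..T}. norm (\<gamma> n * ?Mp n 1 \<omega> t / real (V1 n), \<gamma> n * ?Mp n 2 \<omega> t / real (V2 n)))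
              \<in> borel_measurable (P n)"
          by (rule Y_meas[OF g1 g2 T])
        fix \<omega> assume w: "\<omega> \<in> space (P n)"
        show "0 \<le> (SUP t\<in>{0..T}. norm (\<gamma> n * ?Mp n 1 \<omega> t / real (V1 n), \<gamma> n * ?Mp n 2 \<omega> t / real (V2 n)))"
          by (rule cSUP_upper2[OF Y_bdd[OF g1 g2 w], where x = 0]) (use T in auto)
      next
        fix \<delta> :: real assume \<delta>: "0 < \<delta>"
        have \<delta>2: "0 < \<delta> / 2" using \<delta> by simp
        have T1: "\<And>n. 0 < T + 1" using T by simp
        have lim1: "(\<lambda>n. (\<gamma> n)\<^sup>2 * (T + 1) / real n) \<longlonglongrightarrow> 0"
        proof -
          have "(\<lambda>n. (T + 1) * (\<gamma> n / sqrt (real n))\<^sup>2) \<longlonglongrightarrow> (T + 1) * 0\<^sup>2"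
            by (intro tendsto_mult tendsto_const tendsto_power glim)
          moreover have "(T + 1) * (\<gamma> n / sqrt (real n))\<^sup>2 = (\<gamma> n)\<^sup>2 * (T + 1) / real n" for n
            by (simp add: power_divide)
          ultimately show ?thesis by simp
        qed
        have csz1: "\<And>n. csize (V1 n) (V2 n) 1 = V1 n" and csz2: "\<And>n. csize (V1 n) (V2 n) 2 = V2 n"
          by (simp_all add: csize_def)
        obtain w1 where w1: "0 < w1" "(\<lambda>n. real (csize (V1 n) (V2 n) 1) / real n) \<longlonglongrightarrow> w1" using W[of 1] by auto
        obtain w2 where w2: "0 < w2" "(\<lambda>n. real (csize (V1 n) (V2 n) 2) / real n) \<longlonglongrightarrow> w2" using W[of 2] by auto
        obtain b1 where b1: "b1 \<longlonglongrightarrow> 0" and ev1: "\<forall>\<^sub>F n in sequentially. \<exists>Bad\<in>sets (P n). measure (P n) Bad \<le> b1 n \<and>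
          (\<forall>\<omega>\<in>space (P n) - Bad. \<forall>t\<in>{0..T + 1}. \<gamma> n / real (csize (V1 n) (V2 n) 1) * \<bar>?Mp n 1 \<omega> t\<bar> \<le> \<delta> / 2)"
          using part_k[OF prob g1 w1(2) w1(1) \<gamma> T1 lim1 \<delta>2, where al = al and \<beta> = \<beta>] by blast
        obtain b2 where b2: "b2 \<longlonglongrightarrow> 0" and ev2: "\<forall>\<^sub>F n in sequentially. \<exists>Bad\<in>sets (P n). measure (P n) Bad \<le> b2 n \<and>
          (\<forall>\<omega>\<in>space (P n) - Bad. \<forall>t\<in>{0..T + 1}. \<gamma> n / real (csize (V1 n) (V2 n) 2) * \<bar>?Mp n 2 \<omega> t\<bar> \<le> \<delta> / 2)"
          using part_k[OF prob g2 w2(2) w2(1) \<gamma> T1 lim1 \<delta>2, where al = al and \<beta> = \<beta>] by blast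
        show "\<exists>b. b \<longlonglongrightarrow> 0 \<and> (\<forall>\<^sub>F n in sequentially. \<exists>Bad\<in>sets (P n). measure (P n) Bad \<le> b n \<and>
            (\<forall>\<omega>\<in>space (P n) - Bad. (SUP t\<in>{0..T}. norm (\<gamma> n * ?Mp n 1 \<omega> t / real (V1 n), \<gamma> n * ?Mp n 2 \<omega> t / real (V2 n))) \<le> \<delta>))"
        proof (intro exI[of _ "\<lambda>n. b1 n + b2 n"] conjI)
          show "(\<lambda>n. b1 n + b2 n) \<longlonglongrightarrow> 0" using tendsto_add[OF b1 b2] by simp
          show "\<forall>\<^sub>F n in sequentially. \<exists>Bad\<in>sets (P n). measure (P n) Bad \<le> b1 n + b2 n \<and>
            (\<forall>\<omega>\<in>space (P n) - Bad. (SUP t\<in>{0..T}. norm (\<gamma> n * ?Mp n 1 \<omega> t / real (V1 n), \<gamma> n * ?Mp n 2 \<omega> t / real (V2 n))) \<le> \<delta>)"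
            using ev1 ev2
          proof eventually_elim
            case (elim n)
            obtain B1 where B1: "B1 \<in> sets (P n)" "measure (P n) B1 \<le> b1 n"
              "\<forall>\<omega>\<in>space (P n) - B1. \<forall>t\<in>{0..T + 1}. \<gamma> n / real (csize (V1 n) (V2 n) 1) * \<bar>?Mp n 1 \<omega> t\<bar> \<le> \<delta> / 2"
              using elim(1) by blast
            obtain B2 where B2: "B2 \<in> sets (P n)" "measure (P n) B2 \<le> b2 n"
              "\<forall>\<omega>\<in>space (P n) - B2. \<forall>t\<in>{0..T + 1}. \<gamma> n / real (csize (V1 n) (V2 n) 2) * \<bar>?Mp n 2 \<omega> t\<bar> \<le> \<delta> / 2"
              using elim(2) by blast
            interpret prob_space "P n" by (rule prob)
            show ?case
            proof (intro bexI[of _ "B1 \<union> B2"] conjI ballI)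
              show "B1 \<union> B2 \<in> sets (P n)" using B1(1) B2(1) by auto
              have "measure (P n) (B1 \<union> B2) \<le> measure (P n) B1 + measure (P n) B2"
                by (rule measure_subadditive) (use B1(1) B2(1) in auto)
              thus "measure (P n) (B1 \<union> B2) \<le> b1 n + b2 n" using B1(2) B2(2) by linarith
              fix \<omega> assume w: "\<omega> \<in> space (P n) - (B1 \<union> B2)"
              show "(SUP t\<in>{0..T}. norm (\<gamma> n * ?Mp n 1 \<omega> t / real (V1 n), \<gamma> n * ?Mp n 2 \<omega> t / real (V2 n))) \<le> \<delta>"
              proof (rule cSUP_least)
                show "{0..T} \<noteq> {}" using T by simp
                fix t assume t: "t \<in> {0..T}"
                hence t1: "t \<in> {0..T + 1}" by auto
                have "\<gamma> n / real (csize (V1 n) (V2 n) 1) * \<bar>?Mp n 1 \<omega> t\<bar> \<le> \<delta> / 2"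
                  using B1(3) w t1 by blast
                hence e1: "\<gamma> n / real (V1 n) * \<bar>?Mp n 1 \<omega> t\<bar> \<le> \<delta> / 2" by (simp only: csz1)
                have "\<gamma> n / real (csize (V1 n) (V2 n) 2) * \<bar>?Mp n 2 \<omega> t\<bar> \<le> \<delta> / 2"
                  using B2(3) w t1 by blast
                hence e2: "\<gamma> n / real (V2 n) * \<bar>?Mp n 2 \<omega> t\<bar> \<le> \<delta> / 2" by (simp only: csz2)
                have "norm (\<gamma> n * ?Mp n 1 \<omega> t / real (V1 n), \<gamma> n * ?Mp n 2 \<omega> t / real (V2 n))
                    \<le> norm (\<gamma> n * ?Mp n 1 \<omega> t / real (V1 n)) + norm (\<gamma> n * ?Mp n 2 \<omega> t / real (V2 n))"
                  by (rule norm_Pair_le)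
                also have "norm (\<gamma> n * ?Mp n 1 \<omega> t / real (V1 n)) = \<gamma> n / real (V1 n) * \<bar>?Mp n 1 \<omega> t\<bar>"
                  using \<gamma>[of n] by (simp add: abs_mult)
                also have "norm (\<gamma> n * ?Mp n 2 \<omega> t / real (V2 n)) = \<gamma> n / real (V2 n) * \<bar>?Mp n 2 \<omega> t\<bar>"
                  using \<gamma>[of n] by (simp add: abs_mult)
                finally show "norm (\<gamma> n * ?Mp n 1 \<omega> t / real (V1 n), \<gamma> n * ?Mp n 2 \<omega> t / real (V2 n)) \<le> \<delta>"
                  using e1 e2 by linarith
              qed
            qed
          qed
        qed
      qed
      thus "weak_conv_m (\<lambda>n. distr (P n) borel (\<lambda>\<omega>. SUP t\<in>{0..T}. norm
            (\<gamma> n * Mproc (V1 n) (V2 n) (\<alpha> * lam n / real n) (\<beta> n) (G n \<omega>) (\<sigma> n \<omega>)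
                         (\<lambda>k' sg. N n (k', sg) \<omega>) 1 t / real (V1 n),
             \<gamma> n * Mproc (V1 n) (V2 n) (\<alpha> * lam n / real n) (\<beta> n) (G n \<omega>) (\<sigma> n \<omega>)
                         (\<lambda>k' sg. N n (k', sg) \<omega>) 2 t / real (V2 n)))) (return borel 0)"
      proof -
        have eq1: "\<And>n \<omega> t. ?Mp n 1 \<omega> t = Mproc (V1 n) (V2 n) (\<alpha> * lam n / real n) (\<beta> n) (G n \<omega>) (\<sigma> n \<omega>) (\<lambda>k' sg. N n (k', sg) \<omega>) 1 t"
          using gs.Mp_unfold[OF g1] by (simp add: al_def)
        have eq2: "\<And>n \<omega> t. ?Mp n 2 \<omega> t = Mproc (V1 n) (V2 n) (\<alpha> * lam n / real n) (\<beta> n) (G n \<omega>) (\<sigma> n \<omega>) (\<lambda>k' sg. N n (k', sg) \<omega>) 2 t"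
          using gs.Mp_unfold[OF g2] by (simp add: al_def)
        show ?thesis using part2 unfolding eq1 eq2 .
      qed
    qed
  qed
qed


end
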